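(* Let $\Lambda$ be a finite $k$-graph with no sources and let $J\sqcup K$ be a partition of $\{1,\dots,k\}$ with $J,K$ both nonempty. Let $\{\xi_{m,x}: m\in\mathbb{N}^J, x\in\Lambda^{m,\infty_K}\}$ be the orthonormal basis of point masses in $\ell^2(\partial^K\Lambda)=\bigoplus_{m\in\mathbb{N}^J}\ell^2(\Lambda^{m,\infty_K})$. For $\lambda\in\Lambda$ let $T_\lambda$ be the operator with $T_\lambda\xi_{m,x}=\xi_{m+d(\lambda)_J,\lambda x}$ if $s(\lambda)=r(x)$ and $T_\lambda\xi_{m,x}=0$ otherwise. Then $\{T_\lambda:\lambda\in\Lambda\}$ is a Toeplitz–Cuntz–Krieger $\Lambda$-family, and $\sum_{e\in v\Lambda^{e_i}}T_eT_e^*=T_v$ for all $v\in\Lambda^0$ and $i\in K$.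
   Context: A $k$-graph is a countable category $\Lambda$ with a degree functor $d:\Lambda\to\mathbb{N}^k$ satisfying the factorisation property (if $d(\lambda)=m+n$ there are unique $\mu,\nu$ with $d(\mu)=m$, $d(\nu)=n$, $\lambda=\mu\nu$); vertices $\Lambda^0=d^{-1}(0)$, range $r$ and source $s$, $\Lambda^n=d^{-1}(n)$, $v\Lambda^n=\{\lambda\in\Lambda^n:r(\lambda)=v\}$; finite means each $\Lambda^n$ finite; no sources means $v\Lambda^n\neq\emptyset$ for all $v,n$. $e_1,\dots,e_k$ are the generators of $\mathbb{N}^k$; $\vee$ is coordinatewise maximum. Paths: for $n\in(\mathbb{N}\cup\{\infty\})^k$, $\Lambda^n$ is the set of degree-preserving functors $x$ from $\Omega_{k,n}$ (morphisms $(p,q)$ with $p\le q\le n$, $d(p,q)=q-p$) to $\Lambda$, $d(x)=n$, $r(x)=x(0,0)$; for $\lambda\in\Lambda$ with $s(\lambda)=r(x)$, $\lambda x$ is the unique path of degree $d(\lambda)+d(x)$ with $(\lambda x)(0,d(\lambda))=\lambda$ and $(\lambda x)(d(\lambda)+p,d(\lambda)+q)=x(p,q)$. Writing $n=(n_J,n_K)$: for $m\in\mathbb{N}^J$, $\Lambda^{m,\infty_K}$ is the set of paths $x$ with $d(x)_J=m$ and $d(x)_i=\infty$ for $i\in K$, and $\partial^K\Lambda=\bigcup_{m\in\mathbb{N}^J}\Lambda^{m,\infty_K}$. For $\mu,\nu\in\Lambda$, $\Lambda^{\min}(\mu,\nu)=\{(\eta,\zeta)\in\Lambda\times\Lambda:\mu\eta=\nu\zeta,\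 d(\mu\eta)=d(\mu)\vee d(\nu)\}$. A Toeplitz–Cuntz–Krieger $\Lambda$-family is a set of partial isometries $\{T_\lambda\}$ with (T1) $\{T_v:v\in\Lambda^0\}$ mutually orthogonal projections; (T2) $T_\lambda T_\mu=T_{\lambda\mu}$ when $s(\lambda)=r(\mu)$; (T3) $T_\lambda^*T_\lambda=T_{s(\lambda)}$; (T4) $T_v\ge\sum_{\lambda\in v\Lambda^n}T_\lambda T_\lambda^*$ for all $v,n$; (T5) $T_\mu^*T_\nu=\sum_{(\eta,\zeta)\in\Lambda^{\min}(\mu,\nu)}T_\eta T_\zeta^*$ (empty sum $=0$). *)

theory Defs
  imports "HOL-Analysis.Analysis" "HOL-Library.Extended_Nat"
begin

text \<open>A (small) category given by its set of morphisms; objects are identified with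
  identity morphisms. Degrees in N^k are functions nat => nat supported in {1..k}.\<close>

record 'a kgraph =
  mor :: "'a set"
  deg :: "'a \<Rightarrow> nat \<Rightarrow> nat"
  rng :: "'a \<Rightarrow> 'a"
  src :: "'a \<Rightarrow> 'a"
  cmp :: "'a \<Rightarrow> 'a \<Rightarrow> 'a"

definition is_kgraph :: "nat \<Rightarrow> 'a kgraph \<Rightarrow> bool" where
  "is_kgraph k G \<longleftrightarrow> countable (mor G) \<and>
    (\<forall>l\<in>mor G. rng G l \<in> mor G \<and> src G l \<in> mor G \<and>
        rng G (rng G l) = rng G l \<and> src G (rng G l) = rng G l \<and>
        rng G (src G l) = src G l \<and> src G (src G l) = src G l \<and>
        cmp G (rng G l) l = l \<and> cmp G l (src G l) = l \<and>
        (\<forall>j. j \<notin> {1..k} \<longrightarrow> deg G l j = 0)) \<and>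
    (\<forall>l\<in>mor G. \<forall>m\<in>mor G. src G l = rng G m \<longrightarrow>
        cmp G l m \<in> mor G \<and> rng G (cmp G l m) = rng G l \<and> src G (cmp G l m) = src G m \<and>
        deg G (cmp G l m) = (\<lambda>j. deg G l j + deg G m j)) \<and>
    (\<forall>l\<in>mor G. \<forall>m\<in>mor G. \<forall>n\<in>mor G. src G l = rng G m \<and> src G m = rng G n \<longrightarrow>
        cmp G (cmp G l m) n = cmp G l (cmp G m n)) \<and>
    (\<forall>l\<in>mor G. \<forall>m n. deg G l = (\<lambda>j. m j + n j) \<longrightarrow>
        (\<exists>!pr. fst pr \<in> mor G \<and> snd pr \<in> mor G \<and> deg G (fst pr) = m \<and> deg G (snd pr) = n \<and>
               src G (fst pr) = rng G (snd pr) \<and> l = cmp G (fst pr) (snd pr)))"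

definition kLam :: "'a kgraph \<Rightarrow> (nat \<Rightarrow> nat) \<Rightarrow> 'a set" where
  "kLam G n = {l \<in> mor G. deg G l = n}"

definition vertices :: "'a kgraph \<Rightarrow> 'a set" where
  "vertices G = kLam G (\<lambda>_. 0)"

definition is_degree :: "nat \<Rightarrow> (nat \<Rightarrow> nat) \<Rightarrow> bool" where
  "is_degree k n \<longleftrightarrow> (\<forall>j. j \<notin> {1..k} \<longrightarrow> n j = 0)"

definition unitv :: "nat \<Rightarrow> nat \<Rightarrow> nat" where
  "unitv i = (\<lambda>j. if j = i then 1 else 0)"

definition finite_kgraph :: "'a kgraph \<Rightarrow> bool" where
  "finite_kgraph G \<longleftrightarrow> (\<forall>n. finite (kLam G n))"

definition no_sources :: "nat \<Rightarrow> 'a kgraph \<Rightarrow> bool" where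
  "no_sources k G \<longleftrightarrow> (\<forall>v\<in>vertices G. \<forall>n. is_degree k n \<longrightarrow> {l \<in> kLam G n. rng G l = v} \<noteq> {})"

definition Lmin :: "'a kgraph \<Rightarrow> 'a \<Rightarrow> 'a \<Rightarrow> ('a \<times> 'a) set" where
  "Lmin G \<mu> \<nu> = {(\<eta>, \<zeta>). \<eta> \<in> mor G \<and> \<zeta> \<in> mor G \<and> src G \<mu> = rng G \<eta> \<and> src G \<nu> = rng G \<zeta> \<and>
      cmp G \<mu> \<eta> = cmp G \<nu> \<zeta> \<and> deg G (cmp G \<mu> \<eta>) = sup (deg G \<mu>) (deg G \<nu>)}"

text \<open>A path of degree n in (N u {oo})^k is a degree-preserving functor from Omega_{k,n};
  we store the degree together with the functor, given on morphisms (p,q) with p <= q <= n,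
  normalised to undefined outside that domain.\<close>

type_synonym 'a kpath = "(nat \<Rightarrow> enat) \<times> ((nat \<Rightarrow> nat) \<times> (nat \<Rightarrow> nat) \<Rightarrow> 'a)"

definition pdom :: "(nat \<Rightarrow> enat) \<Rightarrow> ((nat \<Rightarrow> nat) \<times> (nat \<Rightarrow> nat)) set" where
  "pdom n = {(p, q). (\<forall>j. p j \<le> q j) \<and> (\<forall>j. enat (q j) \<le> n j)}"

definition is_path :: "nat \<Rightarrow> 'a kgraph \<Rightarrow> 'a kpath \<Rightarrow> bool" where
  "is_path k G x \<longleftrightarrow>
    (\<forall>j. j \<notin> {1..k} \<longrightarrow> fst x j = 0) \<and>
    (\<forall>pq. pq \<notin> pdom (fst x) \<longrightarrow> snd x pq = undefined) \<and>
    (\<forall>p q. (p, q) \<in> pdom (fst x) \<longrightarrow>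
        snd x (p, q) \<in> mor G \<and> deg G (snd x (p, q)) = (\<lambda>j. q j - p j) \<and>
        rng G (snd x (p, q)) = snd x (p, p) \<and> src G (snd x (p, q)) = snd x (q, q)) \<and>
    (\<forall>p q t. (p, q) \<in> pdom (fst x) \<and> (q, t) \<in> pdom (fst x) \<longrightarrow>
        snd x (p, t) = cmp G (snd x (p, q)) (snd x (q, t)))"

definition prng :: "'a kpath \<Rightarrow> 'a" where
  "prng x = snd x (\<lambda>_. 0, \<lambda>_. 0)"

definition prepend :: "nat \<Rightarrow> 'a kgraph \<Rightarrow> 'a \<Rightarrow> 'a kpath \<Rightarrow> 'a kpath" where
  "prepend k G l x = (THE y. is_path k G y \<and> fst y = (\<lambda>j. enat (deg G l j) + fst x j) \<and>
     snd y (\<lambda>_. 0, deg G l) = l \<and>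
     (\<forall>p q. (p, q) \<in> pdom (fst x) \<longrightarrow>
        snd y (\<lambda>j. deg G l j + p j, \<lambda>j. deg G l j + q j) = snd x (p, q)))"

definition bdryK :: "nat \<Rightarrow> 'a kgraph \<Rightarrow> nat set \<Rightarrow> nat set \<Rightarrow> 'a kpath set" where
  "bdryK k G J K = {x. is_path k G x \<and> (\<forall>j\<in>J. fst x j \<noteq> \<infinity>) \<and> (\<forall>i\<in>K. fst x i = \<infinity>)}"

type_synonym 'b op = "('b \<Rightarrow> complex) \<Rightarrow> ('b \<Rightarrow> complex)"

definition L2 :: "'b set \<Rightarrow> ('b \<Rightarrow> complex) set" where
  "L2 X = {f. (\<forall>x. x \<notin> X \<longrightarrow> f x = 0) \<and> (\<lambda>x. (cmod (f x))\<^sup>2) summable_on X}"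

definition l2inner :: "'b set \<Rightarrow> ('b \<Rightarrow> complex) \<Rightarrow> ('b \<Rightarrow> complex) \<Rightarrow> complex" where
  "l2inner X f g = infsum (\<lambda>x. cnj (f x) * g x) X"

definition l2norm :: "'b set \<Rightarrow> ('b \<Rightarrow> complex) \<Rightarrow> real" where
  "l2norm X f = sqrt (infsum (\<lambda>x. (cmod (f x))\<^sup>2) X)"

definition delta :: "'b \<Rightarrow> 'b \<Rightarrow> complex" where
  "delta x = (\<lambda>y. if y = x then 1 else 0)"

definition zero_op :: "'b op" where
  "zero_op = (\<lambda>f y. 0)"

definition bounded_op :: "'b set \<Rightarrow> 'b op \<Rightarrow> bool" where
  "bounded_op X A \<longleftrightarrow> (\<forall>f\<in>L2 X. A f \<in> L2 X) \<and>
     (\<forall>f\<in>L2 X. \<forall>g\<in>L2 X. \<forall>c. A (\<lambda>x. c * f x + g x) = (\<lambda>x. c * A f x + A g x)) \<and>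
     (\<exists>C. \<forall>f\<in>L2 X. l2norm X (A f) \<le> C * l2norm X f)"

definition op_eq :: "'b set \<Rightarrow> 'b op \<Rightarrow> 'b op \<Rightarrow> bool" where
  "op_eq X A B \<longleftrightarrow> (\<forall>f\<in>L2 X. A f = B f)"

definition is_adjoint :: "'b set \<Rightarrow> 'b op \<Rightarrow> 'b op \<Rightarrow> bool" where
  "is_adjoint X A B \<longleftrightarrow> bounded_op X B \<and>
     (\<forall>f\<in>L2 X. \<forall>g\<in>L2 X. l2inner X (A f) g = l2inner X f (B g))"

definition adj :: "'b set \<Rightarrow> 'b op \<Rightarrow> 'b op" where
  "adj X A = (SOME B. is_adjoint X A B)"

definition is_projection :: "'b set \<Rightarrow> 'b op \<Rightarrow> bool" where
  "is_projection X P \<longleftrightarrow> bounded_op X P \<and> op_eq X (P \<circ> P) P \<and>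
     (\<forall>f\<in>L2 X. \<forall>g\<in>L2 X. l2inner X (P f) g = l2inner X f (P g))"

definition partial_isometry :: "'b set \<Rightarrow> 'b op \<Rightarrow> bool" where
  "partial_isometry X A \<longleftrightarrow> bounded_op X A \<and> is_projection X (adj X A \<circ> A)"

definition op_le :: "'b set \<Rightarrow> 'b op \<Rightarrow> 'b op \<Rightarrow> bool" where
  "op_le X A B \<longleftrightarrow> (\<forall>f\<in>L2 X. Im (l2inner X f (B f) - l2inner X f (A f)) = 0 \<and>
                                 0 \<le> Re (l2inner X f (B f) - l2inner X f (A f)))"

definition op_sum :: "'i set \<Rightarrow> ('i \<Rightarrow> 'b op) \<Rightarrow> 'b op" where
  "op_sum F A = (\<lambda>f y. \<Sum>i\<in>F. A i f y)"

definition TCK_family :: "nat \<Rightarrow> 'a kgraph \<Rightarrow> 'b set \<Rightarrow> ('a \<Rightarrow> 'b op) \<Rightarrow> bool" where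
  "TCK_family k G X T \<longleftrightarrow>
    (\<forall>l\<in>mor G. partial_isometry X (T l)) \<and>
    \<comment> \<open>(T1)\<close>
    (\<forall>v\<in>vertices G. is_projection X (T v)) \<and>
    (\<forall>v\<in>vertices G. \<forall>w\<in>vertices G. v \<noteq> w \<longrightarrow> op_eq X (T v \<circ> T w) zero_op) \<and>
    \<comment> \<open>(T2)\<close>
    (\<forall>l\<in>mor G. \<forall>m\<in>mor G. src G l = rng G m \<longrightarrow> op_eq X (T l \<circ> T m) (T (cmp G l m))) \<and>
    \<comment> \<open>(T3)\<close>
    (\<forall>l\<in>mor G. op_eq X (adj X (T l) \<circ> T l) (T (src G l))) \<and>
    \<comment> \<open>(T4)\<close>
    (\<forall>v\<in>vertices G. \<forall>n. is_degree k n \<longrightarrow>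
        op_le X (op_sum {l \<in> kLam G n. rng G l = v} (\<lambda>l. T l \<circ> adj X (T l))) (T v)) \<and>
    \<comment> \<open>(T5)\<close>
    (\<forall>\<mu>\<in>mor G. \<forall>\<nu>\<in>mor G.
        op_eq X (adj X (T \<mu>) \<circ> T \<nu>) (op_sum (Lmin G \<mu> \<nu>) (\<lambda>(\<eta>, \<zeta>). T \<eta> \<circ> adj X (T \<zeta>))))"

end

theory Submission
  imports Defs
begin

definition restr :: "'b set \<Rightarrow> ('b \<Rightarrow> complex) \<Rightarrow> 'b \<Rightarrow> complex" where
  "restr E f = (\<lambda>y. if y \<in> E then f y else 0)"
definition opf :: "'b set \<Rightarrow> ('b \<Rightarrow> 'b) \<Rightarrow> ('b \<Rightarrow> complex) \<Rightarrow> 'b \<Rightarrow> complex" where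
  "opf D \<phi> f = (\<lambda>y. if y \<in> \<phi> ` D then f (the_inv_into D \<phi> y) else 0)"
definition adjf :: "'b set \<Rightarrow> ('b \<Rightarrow> 'b) \<Rightarrow> ('b \<Rightarrow> complex) \<Rightarrow> 'b \<Rightarrow> complex" where
  "adjf D \<phi> g = (\<lambda>x. if x \<in> D then g (\<phi> x) else 0)"

lemma L2_out: "f \<in> L2 X \<Longrightarrow> y \<notin> X \<Longrightarrow> f y = 0" by (simp add: L2_def)
lemma L2_sum: "f \<in> L2 X \<Longrightarrow> (\<lambda>x. (cmod (f x))\<^sup>2) summable_on X" by (simp add: L2_def)

lemma L2_zero: "(\<lambda>_. 0) \<in> L2 X" by (simp add: L2_def)

lemma L2_delta: "x \<in> X \<Longrightarrow> delta x \<in> L2 X"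
proof -
  assume x: "x \<in> X"
  have "(\<lambda>y. (cmod (delta x y))\<^sup>2) summable_on X"
    by (rule finite_nonzero_values_imp_summable_on) (rule finite_subset[of _ "{x}"], auto simp: delta_def)
  thus ?thesis using x by (auto simp: L2_def delta_def)
qed

lemma L2_restr: assumes "f \<in> L2 X" shows "restr E f \<in> L2 X"
proof -
  have "(\<lambda>y. (cmod (restr E f y))\<^sup>2) summable_on X"
    by (rule summable_on_comparison_test[OF L2_sum[OF assms]]) (auto simp: restr_def)
  thus ?thesis using assms by (auto simp: L2_def restr_def)
qed

lemma sq2: "((x::real) + y)\<^sup>2 \<le> 2 * x\<^sup>2 + 2 * y\<^sup>2"
proof -
  have "0 \<le> (x - y)\<^sup>2" by simp
  thus ?thesis by (simp add: power2_eq_square algebra_simps)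
qed
lemma sq_ineq: "(cmod (a + b))\<^sup>2 \<le> 2 * (cmod a)\<^sup>2 + 2 * (cmod b)\<^sup>2"
proof -
  have "cmod (a + b) \<le> cmod a + cmod b" by (rule norm_triangle_ineq)
  hence "(cmod (a + b))\<^sup>2 \<le> (cmod a + cmod b)\<^sup>2" by (simp add: power_mono)
  also have "\<dots> \<le> 2 * (cmod a)\<^sup>2 + 2 * (cmod b)\<^sup>2" by (rule sq2)
  finally show ?thesis .
qed
lemma L2_lin: assumes "f \<in> L2 X" "g \<in> L2 X" shows "(\<lambda>x. a * f x + g x) \<in> L2 X"
proof -
  have s: "(\<lambda>x. 2 * (cmod a)\<^sup>2 * (cmod (f x))\<^sup>2 + 2 * (cmod (g x))\<^sup>2) summable_on X"
    by (intro summable_on_add summable_on_cmult_right L2_sum assms)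
  have "(\<lambda>x. (cmod (a * f x + g x))\<^sup>2) summable_on X"
  proof (rule summable_on_comparison_test[OF s])
    fix x show "(cmod (a * f x + g x))\<^sup>2 \<le> 2 * (cmod a)\<^sup>2 * (cmod (f x))\<^sup>2 + 2 * (cmod (g x))\<^sup>2"
      using sq_ineq[of "a * f x" "g x"] by (simp add: norm_mult power_mult_distrib)
  qed auto
  thus ?thesis using assms by (auto simp: L2_def)
qed

lemma l2norm_nonneg: "f \<in> L2 X \<Longrightarrow> 0 \<le> l2norm X f"
  by (simp add: l2norm_def infsum_nonneg)

lemma pt_bound: assumes "h \<in> L2 X" shows "cmod (h y) \<le> l2norm X h"
proof (cases "y \<in> X")
  case False thus ?thesis using assms L2_out l2norm_nonneg by fastforce
next
  case True
  have "infsum (\<lambda>x. (cmod (h x))\<^sup>2) {y} \<le> infsum (\<lambda>x. (cmod (h x))\<^sup>2) X"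
    by (rule infsum_mono_neutral) (use True L2_sum[OF assms] in auto)
  hence "(cmod (h y))\<^sup>2 \<le> infsum (\<lambda>x. (cmod (h x))\<^sup>2) X" by simp
  thus ?thesis unfolding l2norm_def by (rule real_le_rsqrt)
qed

lemma tail: assumes "f \<in> L2 X" "e > 0" "finite F1" "F1 \<subseteq> X"
  shows "\<exists>F. finite F \<and> F1 \<subseteq> F \<and> F \<subseteq> X \<and> infsum (\<lambda>x. (cmod (f x))\<^sup>2) (X - F) < e"
proof -
  let ?g = "\<lambda>x. (cmod (f x))\<^sup>2"
  have sg: "?g summable_on X" using L2_sum[OF assms(1)] .
  obtain F0 where F0: "finite F0" "F0 \<subseteq> X" "dist (sum ?g F0) (infsum ?g X) \<le> e/2"
    using infsum_finite_approximation[OF sg, of "e/2"] assms(2) by auto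
  define F where "F = F0 \<union> F1"
  have fin: "finite F" "F \<subseteq> X" using F0 assms F_def by auto
  have sD: "?g summable_on (X - F)" by (rule summable_on_subset_banach[OF sg]) auto
  have "infsum ?g X = infsum ?g (F \<union> (X - F))" using fin by (simp add: Un_absorb1 Un_Diff_cancel)
  also have "\<dots> = infsum ?g F + infsum ?g (X - F)"
    by (rule infsum_Un_disjoint) (use fin sD in auto)
  finally have e1: "infsum ?g (X - F) = infsum ?g X - sum ?g F" using fin by simp
  have "sum ?g F0 \<le> sum ?g F" by (rule sum_mono2) (use fin F_def in auto)
  moreover have "infsum ?g X - sum ?g F0 \<le> dist (sum ?g F0) (infsum ?g X)" by (simp add: dist_real_def)
  ultimately have "infsum ?g X - sum ?g F \<le> e/2" using F0(3) by linarith
  hence "infsum ?g (X - F) < e" using e1 assms(2) by simp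
  thus ?thesis using fin F_def by auto
qed

lemma bop_lin: assumes "bounded_op X A" "f \<in> L2 X" "g \<in> L2 X"
  shows "A (\<lambda>x. a * f x + g x) = (\<lambda>x. a * A f x + A g x)"
  using assms unfolding bounded_op_def by blast

lemma bop_zero: assumes "bounded_op X A" shows "A (\<lambda>_. 0) = (\<lambda>_. 0)"
proof -
  have "A (\<lambda>x. (-1) * (\<lambda>_. 0) x + (\<lambda>_. 0) x) = (\<lambda>x. (-1) * A (\<lambda>_. 0) x + A (\<lambda>_. 0) x)"
    by (rule bop_lin[OF assms L2_zero L2_zero])
  thus ?thesis by simp
qed

lemma bop_L2: "bounded_op X A \<Longrightarrow> f \<in> L2 X \<Longrightarrow> A f \<in> L2 X"
  unfolding bounded_op_def by blast

lemma opf_delta: assumes "inj_on \<phi> D" shows "opf D \<phi> (delta x) = (if x \<in> D then delta (\<phi> x) else (\<lambda>_. 0))"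
  unfolding opf_def delta_def by (auto simp: fun_eq_iff the_inv_into_f_f[OF assms])

lemma op_fin: assumes A: "bounded_op X A" and inj: "inj_on \<phi> D"
  and del: "\<forall>x\<in>X. A (delta x) = (if x \<in> D then delta (\<phi> x) else (\<lambda>_. 0))"
  and f: "f \<in> L2 X" and F: "finite F" "F \<subseteq> X"
  shows "A (restr F f) = opf D \<phi> (restr F f)"
  using F
proof (induction F rule: finite_induct)
  case empty
  have "restr {} f = (\<lambda>_. 0)" by (simp add: restr_def)
  thus ?case using bop_zero[OF A] by (simp add: opf_def)
next
  case (insert x F)
  have e: "restr (insert x F) f = (\<lambda>y. f x * delta x y + restr F f y)"
    using insert(2) by (auto simp: restr_def delta_def fun_eq_iff)
  have xX: "x \<in> X" using insert by auto
  have "A (restr (insert x F) f) = (\<lambda>y. f x * A (delta x) y + A (restr F f) y)"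
    unfolding e by (rule bop_lin[OF A L2_delta[OF xX] L2_restr[OF f]])
  also have "\<dots> = (\<lambda>y. f x * opf D \<phi> (delta x) y + opf D \<phi> (restr F f) y)"
    using insert del xX opf_delta[OF inj] by simp
  also have "\<dots> = opf D \<phi> (restr (insert x F) f)"
    unfolding e by (auto simp: opf_def fun_eq_iff)
  finally show ?case .
qed

lemma small_zero: assumes "\<And>e. e > 0 \<Longrightarrow> cmod z \<le> K * e" "K \<ge> 0" shows "z = 0"
proof (rule ccontr)
  assume "z \<noteq> 0"
  hence p: "cmod z > 0" by simp
  have "cmod z \<le> K * (cmod z / (K + 1))" using assms(1)[of "cmod z / (K+1)"] p assms(2) by simp
  also have "\<dots> < cmod z" using p assms(2) by (simp add: field_simps)
  finally show False by simp
qed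

lemma op_determined: assumes A: "bounded_op X A" and DX: "D \<subseteq> X" and inj: "inj_on \<phi> D"
  and del: "\<forall>x\<in>X. A (delta x) = (if x \<in> D then delta (\<phi> x) else (\<lambda>_. 0))"
  and f: "f \<in> L2 X"
  shows "A f = opf D \<phi> f"
proof
  fix y
  obtain C where C: "\<forall>f\<in>L2 X. l2norm X (A f) \<le> C * l2norm X f" using A unfolding bounded_op_def by blast
  define K where "K = max C 0"
  have "cmod (A f y - opf D \<phi> f y) \<le> K * e" if e: "e > 0" for e
  proof -
    define F1 where "F1 = (if y \<in> \<phi> ` D then {the_inv_into D \<phi> y} else {})"
    have F1: "finite F1" "F1 \<subseteq> X" using DX the_inv_into_into[OF inj] by (auto simp: F1_def)
    obtain F where F: "finite F" "F1 \<subseteq> F" "F \<subseteq> X" "infsum (\<lambda>x. (cmod (f x))\<^sup>2) (X - F) < e\<^sup>2"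
      using tail[OF f _ F1] e by (meson zero_less_power)
    have split: "f = (\<lambda>x. 1 * restr (- F) f x + restr F f x)" by (auto simp: restr_def)
    have Af: "A f = (\<lambda>x. 1 * A (restr (- F) f) x + A (restr F f) x)"
      by (subst split, rule bop_lin[OF A L2_restr[OF f] L2_restr[OF f]])
    have o: "opf D \<phi> (restr F f) y = opf D \<phi> f y" using F(2) F1_def by (auto simp: opf_def restr_def)
    have eq0: "A f y = A (restr (- F) f) y + opf D \<phi> f y"
      using fun_cong[OF Af, of y] op_fin[OF A inj del f F(1,3)] o by simp
    hence eq: "A f y - opf D \<phi> f y = A (restr (- F) f) y" by simp
    have L: "restr (- F) f \<in> L2 X" by (rule L2_restr[OF f])
    have b1: "cmod (A (restr (- F) f) y) \<le> l2norm X (A (restr (- F) f))"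
      by (rule pt_bound[OF bop_L2[OF A L]])
    have b2: "l2norm X (A (restr (- F) f)) \<le> C * l2norm X (restr (- F) f)" using C L by blast
    have b3: "C * l2norm X (restr (- F) f) \<le> K * l2norm X (restr (- F) f)"
      unfolding K_def by (rule mult_right_mono) (auto intro: l2norm_nonneg L)
    have b4: "l2norm X (restr (- F) f) = sqrt (infsum (\<lambda>x. (cmod (f x))\<^sup>2) (X - F))"
      unfolding l2norm_def by (rule arg_cong[where f=sqrt], rule infsum_cong_neutral) (auto simp: restr_def)
    have "sqrt (infsum (\<lambda>x. (cmod (f x))\<^sup>2) (X - F)) \<le> sqrt (e\<^sup>2)"
      by (rule real_sqrt_le_mono) (use F(4) in simp)
    hence b5: "l2norm X (restr (- F) f) \<le> e" using b4 e by simp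
    have b6: "K * l2norm X (restr (- F) f) \<le> K * e" by (rule mult_left_mono[OF b5]) (simp add: K_def)
    show ?thesis unfolding eq using b1 b2 b3 b6 by linarith
  qed
  thus "A f y = opf D \<phi> f y" using small_zero[of "A f y - opf D \<phi> f y" K] K_def by simp
qed


lemma l2inner_delta: assumes "x \<in> X" shows "l2inner X (delta x) h = h x"
proof -
  have "l2inner X (delta x) h = infsum (\<lambda>y. cnj (delta x y) * h y) {x}"
    unfolding l2inner_def by (rule infsum_cong_neutral) (use assms in \<open>auto simp: delta_def\<close>)
  thus ?thesis by (simp add: delta_def)
qed

lemma adjf_L2: assumes DX: "D \<subseteq> X" and phX: "\<phi> ` D \<subseteq> X" and inj: "inj_on \<phi> D" and g: "g \<in> L2 X"
  shows "adjf D \<phi> g \<in> L2 X" "l2norm X (adjf D \<phi> g) \<le> l2norm X g"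
proof -
  let ?g = "\<lambda>y. (cmod (g y))\<^sup>2"
  have s1: "?g summable_on (\<phi> ` D)" by (rule summable_on_subset_banach[OF L2_sum[OF g] phX])
  hence s2: "(?g \<circ> \<phi>) summable_on D" using summable_on_reindex[OF inj] by blast
  have e: "(\<lambda>x. (cmod (adjf D \<phi> g x))\<^sup>2) summable_on X \<longleftrightarrow> (?g \<circ> \<phi>) summable_on D"
    by (rule summable_on_cong_neutral) (use DX in \<open>auto simp: adjf_def\<close>)
  show "adjf D \<phi> g \<in> L2 X" using e s2 DX by (auto simp: L2_def adjf_def)
  have "infsum (\<lambda>x. (cmod (adjf D \<phi> g x))\<^sup>2) X = infsum (?g \<circ> \<phi>) D"
    by (rule infsum_cong_neutral) (use DX in \<open>auto simp: adjf_def\<close>)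
  also have "\<dots> = infsum ?g (\<phi> ` D)" by (rule infsum_reindex[OF inj, symmetric])
  also have "\<dots> \<le> infsum ?g X" by (rule infsum_mono_neutral[OF s1 L2_sum[OF g]]) (use phX in auto)
  finally show "l2norm X (adjf D \<phi> g) \<le> l2norm X g" unfolding l2norm_def by simp
qed

lemma adjf_bop: assumes "D \<subseteq> X" "\<phi> ` D \<subseteq> X" "inj_on \<phi> D" shows "bounded_op X (adjf D \<phi>)"
  unfolding bounded_op_def
proof (intro conjI ballI allI)
  show "\<And>f. f \<in> L2 X \<Longrightarrow> adjf D \<phi> f \<in> L2 X" using adjf_L2[OF assms] by blast
  show "\<And>f g c. adjf D \<phi> (\<lambda>x. c * f x + g x) = (\<lambda>x. c * adjf D \<phi> f x + adjf D \<phi> g x)"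
    by (auto simp: adjf_def)
  show "\<exists>C. \<forall>f\<in>L2 X. l2norm X (adjf D \<phi> f) \<le> C * l2norm X f"
    using adjf_L2[OF assms] by (intro exI[of _ 1]) auto
qed

lemma inner_opf: assumes DX: "D \<subseteq> X" and phX: "\<phi> ` D \<subseteq> X" and inj: "inj_on \<phi> D"
  shows "l2inner X (opf D \<phi> f) g = l2inner X f (adjf D \<phi> g)"
proof -
  have "l2inner X (opf D \<phi> f) g = infsum (\<lambda>y. cnj (f (the_inv_into D \<phi> y)) * g y) (\<phi> ` D)"
    unfolding l2inner_def by (rule infsum_cong_neutral) (use phX in \<open>auto simp: opf_def\<close>)
  also have "\<dots> = infsum ((\<lambda>y. cnj (f (the_inv_into D \<phi> y)) * g y) \<circ> \<phi>) D"
    by (rule infsum_reindex[OF inj])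
  also have "\<dots> = infsum (\<lambda>x. cnj (f x) * g (\<phi> x)) D"
    by (rule infsum_cong) (simp add: the_inv_into_f_f[OF inj])
  also have "\<dots> = l2inner X f (adjf D \<phi> g)"
    unfolding l2inner_def by (rule infsum_cong_neutral) (use DX in \<open>auto simp: adjf_def\<close>)
  finally show ?thesis .
qed

lemma op_adj: assumes A: "bounded_op X A" and DX: "D \<subseteq> X" and phX: "\<phi> ` D \<subseteq> X" and inj: "inj_on \<phi> D"
  and del: "\<forall>x\<in>X. A (delta x) = (if x \<in> D then delta (\<phi> x) else (\<lambda>_. 0))"
  and g: "g \<in> L2 X"
  shows "adj X A g = adjf D \<phi> g"
proof -
  have isa: "is_adjoint X A (adjf D \<phi>)" unfolding is_adjoint_def
    using adjf_bop[OF DX phX inj] op_determined[OF A DX inj del] inner_opf[OF DX phX inj] by simp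
  have B: "is_adjoint X A (adj X A)" unfolding adj_def by (rule someI[where P="is_adjoint X A", OF isa])
  have Bb: "bounded_op X (adj X A)" using B by (simp add: is_adjoint_def)
  show ?thesis
  proof
    fix x show "adj X A g x = adjf D \<phi> g x"
    proof (cases "x \<in> X")
      case False thus ?thesis using L2_out bop_L2[OF Bb g] adjf_L2[OF DX phX inj g] by metis
    next
      case True
      have "adj X A g x = l2inner X (delta x) (adj X A g)" by (simp add: l2inner_delta[OF True])
      also have "\<dots> = l2inner X (A (delta x)) g" using B L2_delta[OF True] g unfolding is_adjoint_def by simp
      also have "\<dots> = l2inner X (delta x) (adjf D \<phi> g)" using isa L2_delta[OF True] g unfolding is_adjoint_def by simp
      also have "\<dots> = adjf D \<phi> g x" by (simp add: l2inner_delta[OF True])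
      finally show ?thesis .
    qed
  qed
qed

lemma restr_proj: assumes "\<forall>f\<in>L2 X. Q f = restr E f" shows "is_projection X Q"
  unfolding is_projection_def bounded_op_def op_eq_def
proof (intro conjI ballI allI)
  fix f assume f: "f \<in> L2 X"
  show "Q f \<in> L2 X" using assms f L2_restr by simp
  have "Q (Q f) = restr E (restr E f)" using assms f L2_restr[OF f] by simp
  moreover have "restr E (restr E f) = restr E f" by (simp add: restr_def fun_eq_iff)
  ultimately show "(Q \<circ> Q) f = Q f" using assms f by simp
next
  fix f g c assume f: "f \<in> L2 X" and g: "g \<in> L2 X"
  show "Q (\<lambda>x. c * f x + g x) = (\<lambda>x. c * Q f x + Q g x)" using assms f g L2_lin[OF f g]
    by (auto simp: restr_def)
  show "l2inner X (Q f) g = l2inner X f (Q g)" using assms f g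
  proof -
    have "(\<lambda>x. cnj (restr E f x) * g x) = (\<lambda>x. cnj (f x) * restr E g x)" by (auto simp: restr_def)
    thus ?thesis using assms f g by (simp add: l2inner_def)
  qed
next
  show "\<exists>C. \<forall>f\<in>L2 X. l2norm X (Q f) \<le> C * l2norm X f"
  proof (intro exI[of _ 1] ballI)
    fix f assume f: "f \<in> L2 X"
    have "infsum (\<lambda>x. (cmod (restr E f x))\<^sup>2) X \<le> infsum (\<lambda>x. (cmod (f x))\<^sup>2) X"
      by (rule infsum_mono[OF _ L2_sum[OF f]]) (use L2_sum[OF L2_restr[OF f]] in \<open>auto simp: restr_def\<close>)
    thus "l2norm X (Q f) \<le> 1 * l2norm X f" using assms f by (simp add: l2norm_def)
  qed
qed

lemma inner_restr: assumes f: "f \<in> L2 X"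
  shows "l2inner X f (restr E f) = of_real (infsum (\<lambda>x. if x \<in> E then (cmod (f x))\<^sup>2 else 0) X)"
    "(\<lambda>x. if x \<in> E then (cmod (f x))\<^sup>2 else 0) summable_on X"
proof -
  show s: "(\<lambda>x. if x \<in> E then (cmod (f x))\<^sup>2 else 0) summable_on X"
    by (rule summable_on_comparison_test[OF L2_sum[OF f]]) auto
  have cz: "cnj z * z = of_real ((cmod z)\<^sup>2)" for z by (metis complex_norm_square mult.commute)
  have "(\<lambda>x. cnj (f x) * restr E f x) = (\<lambda>x. of_real (if x \<in> E then (cmod (f x))\<^sup>2 else 0))"
    by (rule ext) (simp add: restr_def cz)
  moreover have "((\<lambda>x. complex_of_real (if x \<in> E then (cmod (f x))\<^sup>2 else 0)) has_sum
      of_real (infsum (\<lambda>x. if x \<in> E then (cmod (f x))\<^sup>2 else 0) X)) X"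
    by (rule has_sum_of_real[OF has_sum_infsum[OF s]])
  ultimately show "l2inner X f (restr E f) = of_real (infsum (\<lambda>x. if x \<in> E then (cmod (f x))\<^sup>2 else 0) X)"
    unfolding l2inner_def by (simp add: infsumI)
qed

lemma restr_le: assumes "\<forall>f\<in>L2 X. P f = restr F f" "\<forall>f\<in>L2 X. Q f = restr E f" "F \<inter> X \<subseteq> E"
  shows "op_le X P Q"
  unfolding op_le_def
proof (intro ballI conjI)
  fix f assume f: "f \<in> L2 X"
  note a = inner_restr[OF f, of E] and b = inner_restr[OF f, of F]
  have "infsum (\<lambda>x. if x \<in> F then (cmod (f x))\<^sup>2 else 0) X \<le> infsum (\<lambda>x. if x \<in> E then (cmod (f x))\<^sup>2 else 0) X"
    by (rule infsum_mono[OF b(2) a(2)]) (use assms(3) in auto)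
  thus "Im (l2inner X f (Q f) - l2inner X f (P f)) = 0" "0 \<le> Re (l2inner X f (Q f) - l2inner X f (P f))"
    using assms(1,2) f a(1) b(1) by simp_all
qed

lemma adjf_opf: "inj_on \<phi> D \<Longrightarrow> adjf D \<phi> (opf D \<phi> f) = restr D f"
  by (auto simp: adjf_def opf_def restr_def fun_eq_iff the_inv_into_f_f)

lemma opf_adjf: "inj_on \<phi> D \<Longrightarrow> opf D \<phi> (adjf D \<phi> f) = restr (\<phi> ` D) f"
  by (auto simp: adjf_def opf_def restr_def fun_eq_iff the_inv_into_f_f the_inv_into_into)

lemma opf_id: "\<forall>x\<in>D. \<phi> x = x \<Longrightarrow> opf D \<phi> f = restr D f"
proof -
  assume h: "\<forall>x\<in>D. \<phi> x = x"
  have i: "inj_on \<phi> D" using h by (simp add: inj_on_def)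
  have im: "\<phi> ` D = D" using h by force
  show ?thesis using h i im by (auto simp: opf_def restr_def fun_eq_iff) (metis the_inv_into_f_f)
qed

lemma opf_comp: assumes i1: "inj_on \<phi>1 D1" and i2: "inj_on \<phi>2 D2"
  and D3: "D3 = {x \<in> D2. \<phi>2 x \<in> D1}" and ph3: "\<forall>x\<in>D3. \<phi>3 x = \<phi>1 (\<phi>2 x)"
  shows "opf D1 \<phi>1 (opf D2 \<phi>2 f) = opf D3 \<phi>3 f"
proof
  fix y
  have i3: "inj_on \<phi>3 D3" using i1 i2 ph3 D3 unfolding inj_on_def by auto
  show "opf D1 \<phi>1 (opf D2 \<phi>2 f) y = opf D3 \<phi>3 f y"
  proof (cases "\<exists>x\<in>D3. y = \<phi>3 x")
    case True
    then obtain x where x: "x \<in> D3" "y = \<phi>3 x" by blast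
    have x2: "x \<in> D2" "\<phi>2 x \<in> D1" using x D3 by auto
    have y1: "y = \<phi>1 (\<phi>2 x)" using x ph3 by simp
    have "opf D1 \<phi>1 (opf D2 \<phi>2 f) y = f x" using x2 y1 i1 i2 by (simp add: opf_def the_inv_into_f_f)
    moreover have "opf D3 \<phi>3 f y = f x" using x i3 by (simp add: opf_def the_inv_into_f_f)
    ultimately show ?thesis by simp
  next
    case False
    hence "opf D3 \<phi>3 f y = 0" by (auto simp: opf_def)
    moreover have "opf D1 \<phi>1 (opf D2 \<phi>2 f) y = 0"
    proof (rule ccontr)
      assume "opf D1 \<phi>1 (opf D2 \<phi>2 f) y \<noteq> 0"
      then obtain z where z: "z \<in> D1" "y = \<phi>1 z" "the_inv_into D1 \<phi>1 y \<in> \<phi>2 ` D2"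
        by (auto simp: opf_def split: if_splits)
      hence "z \<in> \<phi>2 ` D2" using the_inv_into_f_f[OF i1 z(1)] by simp
      then obtain x where "x \<in> D2" "z = \<phi>2 x" by blast
      hence "x \<in> D3" "y = \<phi>3 x" using z D3 ph3 by auto
      thus False using False by blast
    qed
    ultimately show ?thesis by simp
  qed
qed


locale kg = fixes k :: nat and G :: "'a kgraph" assumes kg: "is_kgraph k G"
begin

abbreviation "M \<equiv> mor G"
abbreviation "d \<equiv> deg G"
abbreviation "r \<equiv> rng G"
abbreviation "s \<equiv> src G"
abbreviation "c \<equiv> cmp G"

lemma ax1: "\<forall>l\<in>mor G. rng G l \<in> mor G \<and> src G l \<in> mor G \<and>
        rng G (rng G l) = rng G l \<and> src G (rng G l) = rng G l \<and>
        rng G (src G l) = src G l \<and> src G (src G l) = src G l \<and>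
        cmp G (rng G l) l = l \<and> cmp G l (src G l) = l \<and>
        (\<forall>j. j \<notin> {1..k} \<longrightarrow> deg G l j = 0)"
  using kg unfolding is_kgraph_def by (elim conjE) assumption
lemma ax2: "\<forall>l\<in>mor G. \<forall>m\<in>mor G. src G l = rng G m \<longrightarrow>
        cmp G l m \<in> mor G \<and> rng G (cmp G l m) = rng G l \<and> src G (cmp G l m) = src G m \<and>
        deg G (cmp G l m) = (\<lambda>j. deg G l j + deg G m j)"
  using kg unfolding is_kgraph_def by (elim conjE) assumption
lemma ax3: "\<forall>l\<in>mor G. \<forall>m\<in>mor G. \<forall>n\<in>mor G. src G l = rng G m \<and> src G m = rng G n \<longrightarrow>
        cmp G (cmp G l m) n = cmp G l (cmp G m n)"
  using kg unfolding is_kgraph_def by (elim conjE) assumption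
lemma ax4: "\<forall>l\<in>mor G. \<forall>m n. deg G l = (\<lambda>j. m j + n j) \<longrightarrow>
        (\<exists>!pr. fst pr \<in> mor G \<and> snd pr \<in> mor G \<and> deg G (fst pr) = m \<and> deg G (snd pr) = n \<and>
               src G (fst pr) = rng G (snd pr) \<and> l = cmp G (fst pr) (snd pr))"
  using kg unfolding is_kgraph_def by (elim conjE) assumption

lemma mor_r: "l \<in> M \<Longrightarrow> r l \<in> M" and mor_s: "l \<in> M \<Longrightarrow> s l \<in> M"
  and r_r: "l \<in> M \<Longrightarrow> r (r l) = r l" and s_r: "l \<in> M \<Longrightarrow> s (r l) = r l"
  and r_s: "l \<in> M \<Longrightarrow> r (s l) = s l" and s_s: "l \<in> M \<Longrightarrow> s (s l) = s l"
  and c_r: "l \<in> M \<Longrightarrow> c (r l) l = l" and c_s: "l \<in> M \<Longrightarrow> c l (s l) = l"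
  and d_supp: "l \<in> M \<Longrightarrow> j \<notin> {1..k} \<Longrightarrow> d l j = 0"
  using ax1 by blast+

lemma cmp_mor: "l \<in> M \<Longrightarrow> m \<in> M \<Longrightarrow> s l = r m \<Longrightarrow> c l m \<in> M"
  and r_c: "l \<in> M \<Longrightarrow> m \<in> M \<Longrightarrow> s l = r m \<Longrightarrow> r (c l m) = r l"
  and s_c: "l \<in> M \<Longrightarrow> m \<in> M \<Longrightarrow> s l = r m \<Longrightarrow> s (c l m) = s m"
  and d_c: "l \<in> M \<Longrightarrow> m \<in> M \<Longrightarrow> s l = r m \<Longrightarrow> d (c l m) = (\<lambda>j. d l j + d m j)"
  using ax2 by blast+

lemma assoc: "l \<in> M \<Longrightarrow> m \<in> M \<Longrightarrow> n \<in> M \<Longrightarrow> s l = r m \<Longrightarrow> s m = r n \<Longrightarrow>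
   c (c l m) n = c l (c m n)"
  using ax3 by blast

lemma fact_ex1: "l \<in> M \<Longrightarrow> d l = (\<lambda>j. m j + n j) \<Longrightarrow>
   \<exists>!pr. fst pr \<in> M \<and> snd pr \<in> M \<and> d (fst pr) = m \<and> d (snd pr) = n \<and>
               s (fst pr) = r (snd pr) \<and> l = c (fst pr) (snd pr)"
  using ax4 by blast

lemma fact_ex: assumes "l \<in> M" "d l = (\<lambda>j. m j + n j)"
  obtains a b where "a \<in> M" "b \<in> M" "d a = m" "d b = n" "s a = r b" "l = c a b"
  using fact_ex1[OF assms] by auto

lemma fact_uniq: assumes "a \<in> M" "b \<in> M" "a' \<in> M" "b' \<in> M" "s a = r b" "s a' = r b'"
  "c a b = c a' b'" "d a = d a'"
  shows "a = a' \<and> b = b'"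
proof -
  have e: "d (c a b) = (\<lambda>j. d a j + d b j)" using d_c[OF assms(1,2,5)] .
  have "d (c a' b') = (\<lambda>j. d a' j + d b' j)" using d_c[OF assms(3,4,6)] .
  hence "\<forall>j. d a j + d b j = d a j + d b' j" using e assms(7,8) by (metis)
  hence db: "d b' = d b" by (simp add: fun_eq_iff)
  have cm: "c a b \<in> M" using cmp_mor assms by auto
  from fact_ex1[OF cm e] have "\<And>p1 p2. fst p1 \<in> M \<and> snd p1 \<in> M \<and> d (fst p1) = d a \<and> d (snd p1) = d b \<and>
               s (fst p1) = r (snd p1) \<and> c a b = c (fst p1) (snd p1) \<Longrightarrow>
    fst p2 \<in> M \<and> snd p2 \<in> M \<and> d (fst p2) = d a \<and> d (snd p2) = d b \<and>
               s (fst p2) = r (snd p2) \<and> c a b = c (fst p2) (snd p2) \<Longrightarrow> p1 = p2"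
    by (metis (no_types, lifting))
  from this[of "(a,b)" "(a',b')"] show ?thesis using assms db by auto
qed

lemma d_s: "l \<in> M \<Longrightarrow> d (s l) = (\<lambda>_. 0)"
proof -
  assume l: "l \<in> M"
  have "d (c l (s l)) = (\<lambda>j. d l j + d (s l) j)" using d_c l mor_s r_s by auto
  thus ?thesis using c_s[OF l] by (auto simp: fun_eq_iff)
qed

lemma d_r: "l \<in> M \<Longrightarrow> d (r l) = (\<lambda>_. 0)"
proof -
  assume l: "l \<in> M"
  have "d (c (r l) l) = (\<lambda>j. d (r l) j + d l j)" using d_c l mor_r s_r by auto
  thus ?thesis using c_r[OF l] by (auto simp: fun_eq_iff)
qed

lemma vertex: "l \<in> M \<Longrightarrow> d l = (\<lambda>_. 0) \<Longrightarrow> r l = l \<and> s l = l"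
proof -
  assume l: "l \<in> M" and d0: "d l = (\<lambda>_. 0)"
  have 1: "c (r l) l = c l (s l)" using c_r c_s l by simp
  have "r l = l \<and> l = s l"
    by (rule fact_uniq) (use l mor_r mor_s s_r r_s 1 d0 d_r in auto)
  thus ?thesis by simp
qed

definition mid :: "'a \<Rightarrow> (nat \<Rightarrow> nat) \<Rightarrow> (nat \<Rightarrow> nat) \<Rightarrow> 'a" where
  "mid m p q = (SOME b. \<exists>a g. a \<in> M \<and> b \<in> M \<and> g \<in> M \<and> s a = r b \<and> s b = r g \<and> d a = p
      \<and> d b = (\<lambda>j. q j - p j) \<and> m = c a (c b g))"

lemma mid_uniq: assumes "a \<in> M" "b \<in> M" "g \<in> M" "s a = r b" "s b = r g"
  "a' \<in> M" "b' \<in> M" "g' \<in> M" "s a' = r b'" "s b' = r g'" "d a = d a'" "d b = d b'"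
  "c a (c b g) = c a' (c b' g')"
shows "b = b'"
proof -
  have "a = a' \<and> c b g = c b' g'"
    by (rule fact_uniq) (use assms cmp_mor r_c in auto)
  hence "c b g = c b' g'" by simp
  thus ?thesis using fact_uniq assms by blast
qed

lemma mid_eq: assumes "a \<in> M" "b \<in> M" "g \<in> M" "s a = r b" "s b = r g" "d a = p"
  "d b = (\<lambda>j. q j - p j)" "m = c a (c b g)"
shows "mid m p q = b"
proof -
  have ex: "\<exists>b. \<exists>a g. a \<in> M \<and> b \<in> M \<and> g \<in> M \<and> s a = r b \<and> s b = r g \<and> d a = p
      \<and> d b = (\<lambda>j. q j - p j) \<and> m = c a (c b g)" using assms by blast
  from someI_ex[OF ex] obtain a' g' where h: "a' \<in> M \<and> mid m p q \<in> M \<and> g' \<in> M \<and> s a' = r (mid m p q) \<and> s (mid m p q) = r g' \<and> d a' = p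
      \<and> d (mid m p q) = (\<lambda>j. q j - p j) \<and> m = c a' (c (mid m p q) g')"
    unfolding mid_def by blast
  show ?thesis
    by (rule sym, rule mid_uniq[of a b g a' "mid m p q" g']) (use h assms in auto)
qed

lemma mid_ex: assumes "m \<in> M" "\<And>j. p j \<le> q j" "\<And>j. q j \<le> d m j"
  obtains a b g where "a \<in> M" "b \<in> M" "g \<in> M" "s a = r b" "s b = r g" "d a = p"
  "d b = (\<lambda>j. q j - p j)" "d g = (\<lambda>j. d m j - q j)" "m = c a (c b g)"
proof -
  have "\<forall>j. p j \<le> d m j" using assms le_trans by blast
  hence "d m = (\<lambda>j. p j + (d m j - p j))" by (simp add: fun_eq_iff)
  then obtain a t where at: "a \<in> M" "t \<in> M" "d a = p" "d t = (\<lambda>j. d m j - p j)" "s a = r t" "m = c a t"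
    by (rule fact_ex[OF assms(1)])
  have "d t = (\<lambda>j. (q j - p j) + (d m j - q j))" using at(4) assms by (auto simp: fun_eq_iff)
  then obtain b g where "b \<in> M" "g \<in> M" "d b = (\<lambda>j. q j - p j)" "d g = (\<lambda>j. d m j - q j)" "s b = r g" "t = c b g"
    by (rule fact_ex[OF at(2)])
  with at show ?thesis using that r_c by auto
qed


end

context kg begin

lemma mid_props: assumes "m \<in> M" "\<And>j. p j \<le> q j" "\<And>j. q j \<le> d m j"
  shows "mid m p q \<in> M" "d (mid m p q) = (\<lambda>j. q j - p j)" "r (mid m p q) = mid m p p"
    "s (mid m p q) = mid m q q"
proof -
  obtain a b g where h: "a \<in> M" "b \<in> M" "g \<in> M" "s a = r b" "s b = r g" "d a = p"
  "d b = (\<lambda>j. q j - p j)" "d g = (\<lambda>j. d m j - q j)" "m = c a (c b g)"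
    using mid_ex[OF assms] by blast
  have mb: "mid m p q = b" by (rule mid_eq[OF h(1-7,9)])
  thus "mid m p q \<in> M" "d (mid m p q) = (\<lambda>j. q j - p j)" using h by auto
  have bg: "c b g \<in> M" "r (c b g) = r b" using cmp_mor[OF h(2,3,5)] r_c[OF h(2,3,5)] by auto
  have e1: "c (s a) (c b g) = c b g" using c_r[OF bg(1)] bg(2) h(4) by simp
  have "mid m p p = s a"
    by (rule mid_eq[of a "s a" "c b g"]) (use h bg mor_s[OF h(1)] r_s[OF h(1)] s_s[OF h(1)] d_s[OF h(1)] e1 in simp_all)
  thus "r (mid m p q) = mid m p p" using mb h by simp
  have ab: "c a b \<in> M" "s (c a b) = s b" "d (c a b) = (\<lambda>j. d a j + d b j)"
    using cmp_mor[OF h(1,2,4)] s_c[OF h(1,2,4)] d_c[OF h(1,2,4)] by auto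
  have e2: "c (s b) g = g" using c_r[OF h(3)] h(5) by simp
  have e3: "m = c (c a b) (c (s b) g)" using e2 h(9) assoc[OF h(1-5)] by simp
  have dq: "d (c a b) = q" using ab h assms(2) by (auto simp: fun_eq_iff)
  have "mid m q q = s b"
    by (rule mid_eq[OF ab(1) mor_s[OF h(2)] h(3) _ _ dq _ e3]) (use ab r_s[OF h(2)] s_s[OF h(2)] h(5) d_s[OF h(2)] in simp_all)
  thus "s (mid m p q) = mid m q q" using mb by simp
qed


lemma mid_ext: assumes "m \<in> M" "g \<in> M" "s m = r g" "\<And>j. p j \<le> q j" "\<And>j. q j \<le> d m j"
  shows "mid (c m g) p q = mid m p q"
proof -
  obtain a b g' where h: "a \<in> M" "b \<in> M" "g' \<in> M" "s a = r b" "s b = r g'" "d a = p"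
  "d b = (\<lambda>j. q j - p j)" "d g' = (\<lambda>j. d m j - q j)" "m = c a (c b g')"
    using mid_ex[OF assms(1,4,5)] by blast
  have mb: "mid m p q = b" by (rule mid_eq[OF h(1-7,9)])
  have bg: "c b g' \<in> M" "s (c b g') = s g'" using cmp_mor[OF h(2,3,5)] s_c[OF h(2,3,5)] by auto
  have sm: "s m = s g'" using h(9) s_c[OF h(1) bg(1)] r_c[OF h(2,3,5)] h(4) bg(2) by simp
  have g3: "s g' = r g" using sm assms(3) by simp
  have e1: "c m g = c a (c (c b g') g)" using h(9) assoc[OF h(1) bg(1) assms(2)] h(4) r_c[OF h(2,3,5)] bg(2) g3 by simp
  have e2: "c (c b g') g = c b (c g' g)" using assoc[OF h(2,3) assms(2) h(5) g3] .
  have "mid (c m g) p q = b"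
    by (rule mid_eq[OF h(1,2) cmp_mor[OF h(3) assms(2) g3] h(4) _ h(6,7)]) (use e1 e2 h(5) r_c[OF h(3) assms(2) g3] in simp_all)
  thus ?thesis using mb by simp
qed

lemma mid_comp: assumes "m \<in> M" "\<And>j. p j \<le> q j" "\<And>j. q j \<le> t j" "\<And>j. t j \<le> d m j"
  shows "c (mid m p q) (mid m q t) = mid m p t"
proof -
  have pt: "\<And>j. p j \<le> t j" using assms le_trans by blast
  obtain a b g where h: "a \<in> M" "b \<in> M" "g \<in> M" "s a = r b" "s b = r g" "d a = p"
  "d b = (\<lambda>j. t j - p j)" "d g = (\<lambda>j. d m j - t j)" "m = c a (c b g)"
    using mid_ex[OF assms(1) pt assms(4)] by blast
  have mb: "mid m p t = b" by (rule mid_eq[OF h(1-7,9)])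
  have "d b = (\<lambda>j. (q j - p j) + (t j - q j))" using h assms by (auto simp: fun_eq_iff)
  then obtain b1 b2 where b: "b1 \<in> M" "b2 \<in> M" "d b1 = (\<lambda>j. q j - p j)" "d b2 = (\<lambda>j. t j - q j)"
     "s b1 = r b2" "b = c b1 b2" by (rule fact_ex[OF h(2)])
  have rb1: "r b1 = r b" "s b2 = s b" using b r_c[OF b(1,2,5)] s_c[OF b(1,2,5)] by auto
  have ab1: "s a = r b1" using rb1 h by simp
  have b2g: "s b2 = r g" using rb1 h by simp
  have 1: "m = c a (c b1 (c b2 g))" using h(9) b(6) assoc[OF b(1,2) h(3) b(5) b2g] by simp
  have m1: "mid m p q = b1"
    by (rule mid_eq[OF h(1) b(1) cmp_mor[OF b(2) h(3) b2g] ab1 _ h(6) b(3) 1]) (use r_c[OF b(2) h(3) b2g] b(5) in simp)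
  have 2: "m = c (c a b1) (c b2 g)" using 1 assoc[OF h(1) b(1) cmp_mor[OF b(2) h(3) b2g] ab1] b(5) r_c[OF b(2) h(3) b2g] by simp
  have dq: "d (c a b1) = q" using d_c[OF h(1) b(1) ab1] h(6) b(3) assms(2) by (auto simp: fun_eq_iff)
  have "mid m q t = b2"
    by (rule mid_eq[OF cmp_mor[OF h(1) b(1) ab1] b(2) h(3) _ b2g dq b(4) 2]) (use s_c[OF h(1) b(1) ab1] b(5) in simp)
  thus ?thesis using mb b(6) m1 by simp
qed

lemma mid_full: "l \<in> M \<Longrightarrow> mid l (\<lambda>_. 0) (d l) = l"
  by (rule mid_eq[of "r l" l "s l"]) (use mor_r mor_s s_r r_s d_r c_r c_s in auto)

lemma mid_shift: assumes "al \<in> M" "be \<in> M" "s al = r be" "\<And>j. p j \<le> q j" "\<And>j. q j \<le> d be j"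
  shows "mid (c al be) (\<lambda>j. d al j + p j) (\<lambda>j. d al j + q j) = mid be p q"
proof -
  obtain a b g where h: "a \<in> M" "b \<in> M" "g \<in> M" "s a = r b" "s b = r g" "d a = p"
  "d b = (\<lambda>j. q j - p j)" "d g = (\<lambda>j. d be j - q j)" "be = c a (c b g)"
    using mid_ex[OF assms(2,4,5)] by blast
  have mb: "mid be p q = b" by (rule mid_eq[OF h(1-7,9)])
  have bg: "c b g \<in> M" "r (c b g) = r b" using cmp_mor[OF h(2,3,5)] r_c[OF h(2,3,5)] by auto
  have ra: "r a = r be" using h(9) r_c[OF h(1) bg(1)] h(4) bg(2) by simp
  have ala: "s al = r a" using ra assms(3) by simp
  have e: "c al be = c (c al a) (c b g)" using h(9) assoc[OF assms(1) h(1) bg(1) ala] h(4) bg(2) by simp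
  have dd: "d (c al a) = (\<lambda>j. d al j + p j)" using d_c[OF assms(1) h(1) ala] h(6) by simp
  have "mid (c al be) (\<lambda>j. d al j + p j) (\<lambda>j. d al j + q j) = b"
    by (rule mid_eq[OF cmp_mor[OF assms(1) h(1) ala] h(2,3) _ h(5) dd _ e]) (use s_c[OF assms(1) h(1) ala] h(4) h(7) in simp_all)
  thus ?thesis using mb by simp
qed

end

lemma en1: "enat q \<le> enat a + e \<Longrightarrow> enat (q - a) \<le> e" by (cases e) auto
lemma en2: "(enat (a + u) \<le> enat a + e) = (enat u \<le> e)" by (cases e) auto
lemma en3: "enat a \<le> enat a + e" by (cases e) auto

lemma pdom_iff: "(p,q) \<in> pdom n \<longleftrightarrow> (\<forall>j. p j \<le> q j) \<and> (\<forall>j. enat (q j) \<le> n j)"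
  by (simp add: pdom_def)

lemma pdom_le: "(p,q) \<in> pdom n \<Longrightarrow> (p,p) \<in> pdom n \<and> (q,q) \<in> pdom n \<and> ((\<lambda>_. 0), q) \<in> pdom n \<and> ((\<lambda>_. 0), p) \<in> pdom n"
proof -
  assume h: "(p,q) \<in> pdom n"
  have "\<And>j. enat (p j) \<le> n j"
  proof -
    fix j
    have "enat (p j) \<le> enat (q j)" using h by (simp add: pdom_iff)
    also have "\<dots> \<le> n j" using h by (simp add: pdom_iff)
    finally show "enat (p j) \<le> n j" .
  qed
  thus ?thesis using h by (simp add: pdom_iff)
qed

context kg begin

lemma pathD: "is_path k G x \<Longrightarrow> (p,q) \<in> pdom (fst x) \<Longrightarrow>
  snd x (p,q) \<in> M \<and> d (snd x (p,q)) = (\<lambda>j. q j - p j) \<and> r (snd x (p,q)) = snd x (p,p) \<and> s (snd x (p,q)) = snd x (q,q)"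
  unfolding is_path_def by blast

lemma path_comp: "is_path k G x \<Longrightarrow> (p,q) \<in> pdom (fst x) \<Longrightarrow> (q,t) \<in> pdom (fst x) \<Longrightarrow>
  snd x (p,t) = c (snd x (p,q)) (snd x (q,t))"
  unfolding is_path_def by blast

lemma path_undef: "is_path k G x \<Longrightarrow> pq \<notin> pdom (fst x) \<Longrightarrow> snd x pq = undefined"
  unfolding is_path_def by blast

lemma path_supp: "is_path k G x \<Longrightarrow> j \<notin> {1..k} \<Longrightarrow> fst x j = 0"
  unfolding is_path_def by blast

lemma path_mid: assumes "is_path k G y" "(p,q) \<in> pdom (fst y)" "(q,t) \<in> pdom (fst y)"
  shows "snd y (p,q) = mid (snd y (\<lambda>_. 0, t)) p q"
proof -
  have pt: "(p,t) \<in> pdom (fst y)" using assms(2,3) unfolding pdom_iff using order_trans by blast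
  have p0: "((\<lambda>_. 0), p) \<in> pdom (fst y)" using pdom_le[OF assms(2)] by blast
  have e1: "snd y (p,t) = c (snd y (p,q)) (snd y (q,t))" by (rule path_comp[OF assms])
  have e2: "snd y (\<lambda>_. 0, t) = c (snd y (\<lambda>_. 0, p)) (snd y (p,t))" by (rule path_comp[OF assms(1) p0 pt])
  note A = pathD[OF assms(1) p0] pathD[OF assms(1) assms(2)] pathD[OF assms(1) assms(3)]
  show ?thesis
    by (rule sym, rule mid_eq[of "snd y (\<lambda>_. 0, p)" _ "snd y (q,t)"]) (use A e1 e2 in auto)
qed

definition pcond :: "'a \<Rightarrow> 'a kpath \<Rightarrow> 'a kpath \<Rightarrow> bool" where
  "pcond l x y \<longleftrightarrow> is_path k G y \<and> fst y = (\<lambda>j. enat (d l j) + fst x j) \<and>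
     snd y (\<lambda>_. 0, d l) = l \<and>
     (\<forall>p q. (p, q) \<in> pdom (fst x) \<longrightarrow>
        snd y (\<lambda>j. d l j + p j, \<lambda>j. d l j + q j) = snd x (p, q))"

lemma prepend_eq: "prepend k G l x = (THE y. pcond l x y)"
  by (simp add: prepend_def pcond_def)

lemma pcond_uniq: assumes "l \<in> M" "is_path k G x" "pcond l x y1" "pcond l x y2"
  shows "y1 = y2"
proof -
  have f: "fst y1 = fst y2" using assms(3,4) by (simp add: pcond_def)
  have "snd y1 (p,q) = snd y2 (p,q)" for p q
  proof (cases "(p,q) \<in> pdom (fst y1)")
    case False
    thus ?thesis using path_undef assms(3,4) f unfolding pcond_def by metis
  next
    case True
    define u where "u = (\<lambda>j. q j - d l j)"
    define t where "t = (\<lambda>j. d l j + u j)"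
    have q1: "\<forall>j. enat (q j) \<le> enat (d l j) + fst x j" using True assms(3) by (simp add: pcond_def pdom_iff)
    have u0: "((\<lambda>_. 0), u) \<in> pdom (fst x)" unfolding pdom_iff u_def using q1 en1 by auto
    have qt: "(q,t) \<in> pdom (fst y1)" "(q,t) \<in> pdom (fst y2)" using assms(3) f q1 en2 u0 unfolding pdom_iff pcond_def t_def u_def
      by auto
    have a0: "((\<lambda>_. 0), d l) \<in> pdom (fst y1)" "((\<lambda>_. 0), d l) \<in> pdom (fst y2)"
      using assms(3) f en3 unfolding pcond_def pdom_iff by auto
    have at: "(d l, t) \<in> pdom (fst y1)" "(d l, t) \<in> pdom (fst y2)" using qt True unfolding pdom_iff t_def by auto
    have Y: "snd y (\<lambda>_. 0, t) = c l (snd x (\<lambda>_. 0, u))" if "pcond l x y" "(d l, t) \<in> pdom (fst y)"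
       "((\<lambda>_. 0), d l) \<in> pdom (fst y)" for y
    proof -
      have "snd y (\<lambda>_. 0, t) = c (snd y (\<lambda>_. 0, d l)) (snd y (d l, t))"
        using path_comp that unfolding pcond_def by blast
      moreover have "snd y (\<lambda>j. d l j + 0, \<lambda>j. d l j + u j) = snd x (\<lambda>_. 0, u)"
        using that(1) u0 unfolding pcond_def by blast
      ultimately show ?thesis using that(1) unfolding pcond_def t_def by simp
    qed
    have "snd y1 (p,q) = mid (snd y1 (\<lambda>_. 0, t)) p q" by (rule path_mid) (use assms(3) True qt in \<open>auto simp: pcond_def\<close>)
    moreover have "snd y2 (p,q) = mid (snd y2 (\<lambda>_. 0, t)) p q" by (rule path_mid) (use assms(4) True qt f in \<open>auto simp: pcond_def\<close>)
    ultimately show ?thesis using Y[OF assms(3) at(1) a0(1)] Y[OF assms(4) at(2) a0(2)] by simp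
  qed
  hence "snd y1 = snd y2" by auto
  thus ?thesis using f by (simp add: prod_eq_iff)
qed

end

context kg begin

definition ppath :: "'a \<Rightarrow> 'a kpath \<Rightarrow> 'a kpath" where
  "ppath l x = (\<lambda>j. enat (d l j) + fst x j,
     \<lambda>(p,q). if (p,q) \<in> pdom (\<lambda>j. enat (d l j) + fst x j)
             then mid (c l (snd x (\<lambda>_. 0, \<lambda>j. q j - d l j))) p q else undefined)"

lemma ppath_fst: "fst (ppath l x) = (\<lambda>j. enat (d l j) + fst x j)" by (simp add: ppath_def)
lemma ppath_snd: "snd (ppath l x) (p,q) = (if (p,q) \<in> pdom (\<lambda>j. enat (d l j) + fst x j)
             then mid (c l (snd x (\<lambda>_. 0, \<lambda>j. q j - d l j))) p q else undefined)"
  by (simp add: ppath_def)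

lemma ppath_pcond: assumes l: "l \<in> M" and x: "is_path k G x" and sl: "s l = prng x"
  shows "pcond l x (ppath l x)"
proof -
  define N where "N = (\<lambda>j. enat (d l j) + fst x j)"
  define Z where "Z u = c l (snd x (\<lambda>_. 0, u))" for u
  have Zp: "Z u \<in> M \<and> d (Z u) = (\<lambda>j. d l j + u j) \<and> s (Z u) = snd x (u,u)"
    if "((\<lambda>_. 0), u) \<in> pdom (fst x)" for u
  proof -
    note P = pathD[OF x that]
    have "s l = r (snd x (\<lambda>_. 0, u))" using P sl by (simp add: prng_def)
    thus ?thesis unfolding Z_def using cmp_mor[OF l] d_c[OF l] s_c[OF l] P by auto
  qed
  have Zext: "Z u' = c (Z u) (snd x (u,u'))" if "((\<lambda>_. 0), u) \<in> pdom (fst x)" "(u,u') \<in> pdom (fst x)" for u u'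
  proof -
    note P1 = pathD[OF x that(1)] and P2 = pathD[OF x that(2)]
    have "snd x (\<lambda>_. 0, u') = c (snd x (\<lambda>_. 0, u)) (snd x (u,u'))" by (rule path_comp[OF x that])
    moreover have "s l = r (snd x (\<lambda>_. 0, u))" using P1 sl by (simp add: prng_def)
    ultimately show ?thesis unfolding Z_def using assoc[OF l] P1 P2 by simp
  qed
  have u0: "((\<lambda>_. 0), (\<lambda>j. q j - d l j)) \<in> pdom (fst x)" if "(p,q) \<in> pdom N" for p q
    using that en1 unfolding N_def pdom_iff by auto
  have S: "snd (ppath l x) (p,q) = mid (Z (\<lambda>j. q j - d l j)) p q" if "(p,q) \<in> pdom N" for p q
    using that unfolding ppath_snd N_def Z_def by simp
  have Sm: "snd (ppath l x) (p,q) = mid (Z (\<lambda>j. t j - d l j)) p q" if "(p,q) \<in> pdom N" "(q,t) \<in> pdom N" for p q t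
  proof -
    have a: "((\<lambda>_. 0), (\<lambda>j. q j - d l j)) \<in> pdom (fst x)" using u0 that(1) by blast
    have b: "((\<lambda>j. q j - d l j), (\<lambda>j. t j - d l j)) \<in> pdom (fst x)"
      using u0[OF that(2)] that(2) unfolding pdom_iff by (auto simp: diff_le_mono)
    have "mid (Z (\<lambda>j. t j - d l j)) p q = mid (Z (\<lambda>j. q j - d l j)) p q"
      unfolding Zext[OF a b]
      by (rule mid_ext) (use Zp[OF a] pathD[OF x b] that(1) in \<open>auto simp: pdom_iff\<close>)
    thus ?thesis using S[OF that(1)] by simp
  qed
  have Mp: "mid (Z (\<lambda>j. q j - d l j)) p q \<in> M \<and> d (mid (Z (\<lambda>j. q j - d l j)) p q) = (\<lambda>j. q j - p j)
     \<and> r (mid (Z (\<lambda>j. q j - d l j)) p q) = mid (Z (\<lambda>j. q j - d l j)) p p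
     \<and> s (mid (Z (\<lambda>j. q j - d l j)) p q) = mid (Z (\<lambda>j. q j - d l j)) q q" if "(p,q) \<in> pdom N" for p q
    using mid_props[of "Z (\<lambda>j. q j - d l j)" p q] Zp[OF u0[OF that]] that by (auto simp: pdom_iff)
  have path: "is_path k G (ppath l x)"
    unfolding is_path_def
  proof (intro conjI allI impI)
    fix j assume "j \<notin> {1..k}" thus "fst (ppath l x) j = 0"
      using d_supp[OF l] path_supp[OF x] by (simp add: ppath_fst zero_enat_def)
  next
    fix pq assume "pq \<notin> pdom (fst (ppath l x))" thus "snd (ppath l x) pq = undefined"
      by (cases pq) (simp add: ppath_snd ppath_fst)
  next
    fix p q assume h: "(p,q) \<in> pdom (fst (ppath l x))"
    hence h': "(p,q) \<in> pdom N" by (simp add: ppath_fst N_def)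
    have pp: "(p,p) \<in> pdom N" "(q,q) \<in> pdom N" using pdom_le[OF h'] by auto
    show "snd (ppath l x) (p, q) \<in> M" "deg G (snd (ppath l x) (p, q)) = (\<lambda>j. q j - p j)"
      using Mp[OF h'] S[OF h'] by auto
    show "r (snd (ppath l x) (p, q)) = snd (ppath l x) (p, p)"
      using Mp[OF h'] S[OF h'] Sm[OF pp(1) h'] by auto
    show "s (snd (ppath l x) (p, q)) = snd (ppath l x) (q, q)"
      using Mp[OF h'] S[OF h'] Sm[OF pp(2) pp(2)] by auto
  next
    fix p q t assume h: "(p, q) \<in> pdom (fst (ppath l x)) \<and> (q, t) \<in> pdom (fst (ppath l x))"
    hence h': "(p,q) \<in> pdom N" "(q,t) \<in> pdom N" by (auto simp: ppath_fst N_def)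
    have pt: "(p,t) \<in> pdom N" using h' unfolding pdom_iff using order_trans by blast
    show "snd (ppath l x) (p, t) = c (snd (ppath l x) (p, q)) (snd (ppath l x) (q, t))"
      unfolding S[OF pt] Sm[OF h'] S[OF h'(2)]
      by (rule mid_comp[symmetric]) (use Zp[OF u0[OF h'(2)]] h' in \<open>auto simp: pdom_iff\<close>)
  qed
  have z0: "((\<lambda>_. 0), (\<lambda>_. 0)) \<in> pdom (fst x)" by (simp add: pdom_iff zero_enat_def[symmetric])
  have first: "snd (ppath l x) (\<lambda>_. 0, d l) = l"
  proof -
    have a: "((\<lambda>_. 0), d l) \<in> pdom N" unfolding N_def pdom_iff using en3 by auto
    have "Z (\<lambda>_. 0) = l" unfolding Z_def using c_s[OF l] sl by (simp add: prng_def)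
    thus ?thesis using S[OF a] mid_full[OF l] by simp
  qed
  have shift: "snd (ppath l x) (\<lambda>j. d l j + p j, \<lambda>j. d l j + q j) = snd x (p, q)"
    if "(p, q) \<in> pdom (fst x)" for p q
  proof -
    have a: "((\<lambda>j. d l j + p j), (\<lambda>j. d l j + q j)) \<in> pdom N"
      using that unfolding N_def pdom_iff by (simp add: en2)
    note P = pathD[OF x pdom_le[OF that, THEN conjunct2, THEN conjunct2, THEN conjunct1]]
    have rl: "s l = r (snd x (\<lambda>_. 0, q))" using P sl by (simp add: prng_def)
    have "snd (ppath l x) (\<lambda>j. d l j + p j, \<lambda>j. d l j + q j) = mid (c l (snd x (\<lambda>_. 0, q))) (\<lambda>j. d l j + p j) (\<lambda>j. d l j + q j)"
      using S[OF a] unfolding Z_def by simp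
    also have "\<dots> = mid (snd x (\<lambda>_. 0, q)) p q"
      by (rule mid_shift[OF l _ rl]) (use P that in \<open>auto simp: pdom_iff\<close>)
    also have "\<dots> = snd x (p,q)"
      by (rule path_mid[symmetric, OF x that]) (use pdom_le[OF that] in auto)
    finally show ?thesis .
  qed
  show ?thesis unfolding pcond_def using path first shift by (simp add: ppath_fst)
qed

lemma prepend_pcond: assumes "l \<in> M" "is_path k G x" "s l = prng x" shows "pcond l x (prepend k G l x)"
proof -
  have "\<And>y. pcond l x y \<Longrightarrow> y = ppath l x" using pcond_uniq[OF assms(1,2)] ppath_pcond[OF assms] by blast
  thus ?thesis unfolding prepend_eq using theI[of "pcond l x", OF ppath_pcond[OF assms]] by blast
qed

lemma prepend_unique: "l \<in> M \<Longrightarrow> is_path k G x \<Longrightarrow> s l = prng x \<Longrightarrow> pcond l x y \<Longrightarrow> prepend k G l x = y"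
  using prepend_pcond pcond_uniq by blast

end

lemma en4: "enat a + e = enat a + e' \<Longrightarrow> e = e'" by (cases e; cases e') auto
lemma en5: "enat n \<le> e \<Longrightarrow> enat q \<le> e - enat n \<Longrightarrow> enat (n + q) \<le> e" by (cases e) auto
lemma en6: "enat n \<le> e \<Longrightarrow> enat n + (e - enat n) = e" by (cases e) auto
lemma en7: "enat (a + b) + e = enat a + (enat b + e)" by (cases e) auto

context kg begin

lemma prepend_props: assumes "l \<in> M" "is_path k G x" "s l = prng x"
  shows "is_path k G (prepend k G l x)" "fst (prepend k G l x) = (\<lambda>j. enat (d l j) + fst x j)"
    "snd (prepend k G l x) (\<lambda>_. 0, d l) = l"
    "\<And>p q. (p, q) \<in> pdom (fst x) \<Longrightarrow> snd (prepend k G l x) (\<lambda>j. d l j + p j, \<lambda>j. d l j + q j) = snd x (p, q)"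
  using prepend_pcond[OF assms] unfolding pcond_def by auto

lemma prng_prepend: assumes "l \<in> M" "is_path k G x" "s l = prng x"
  shows "prng (prepend k G l x) = r l"
proof -
  note P = prepend_props[OF assms]
  have "((\<lambda>_. 0), d l) \<in> pdom (fst (prepend k G l x))" using P(2) en3 by (simp add: pdom_iff)
  from pathD[OF P(1) this] P(3) show ?thesis by (simp add: prng_def)
qed

lemma prng_mor: assumes "is_path k G x" shows "prng x \<in> M" "d (prng x) = (\<lambda>_. 0)" "s (prng x) = prng x" "r (prng x) = prng x"
proof -
  have "((\<lambda>_. 0), (\<lambda>_. 0)) \<in> pdom (fst x)" by (simp add: pdom_iff zero_enat_def[symmetric])
  from pathD[OF assms this] show "prng x \<in> M" "d (prng x) = (\<lambda>_. 0)" "s (prng x) = prng x" "r (prng x) = prng x"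
    by (auto simp: prng_def)
qed

lemma prepend_vertex: assumes "is_path k G x" shows "prepend k G (prng x) x = x"
proof -
  note P = prng_mor[OF assms]
  have "pcond (prng x) x x" unfolding pcond_def using assms P by (simp add: zero_enat_def[symmetric] prng_def)
  thus ?thesis using prepend_unique P assms by simp
qed

lemma prepend_assoc: assumes l: "l \<in> M" and m: "m \<in> M" and lm: "s l = r m" and x: "is_path k G x"
  and mx: "s m = prng x"
  shows "prepend k G (c l m) x = prepend k G l (prepend k G m x)"
proof (rule prepend_unique)
  show lmM: "c l m \<in> M" using cmp_mor[OF l m lm] .
  show "is_path k G x" by (rule x)
  show "s (c l m) = prng x" using s_c[OF l m lm] mx by simp
  define w where "w = prepend k G m x"
  note W = prepend_props[OF m x mx, folded w_def]
  have lw: "s l = prng w" using prng_prepend[OF m x mx] lm w_def by simp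
  define u where "u = prepend k G l w"
  note U = prepend_props[OF l W(1) lw, folded u_def]
  have dlm: "d (c l m) = (\<lambda>j. d l j + d m j)" by (rule d_c[OF l m lm])
  have fu: "fst u = (\<lambda>j. enat (d (c l m) j) + fst x j)" using U(2) W(2) dlm by (simp add: en7)
  have a1: "((\<lambda>_. 0), d l) \<in> pdom (fst u)" using U(2) en3 by (simp add: pdom_iff)
  have a2: "(d l, d (c l m)) \<in> pdom (fst u)" using fu dlm en3 by (simp add: pdom_iff)
  have a3: "((\<lambda>_. 0), d m) \<in> pdom (fst w)" using W(2) en3 by (simp add: pdom_iff)
  have "snd u (\<lambda>_. 0, d (c l m)) = c (snd u (\<lambda>_. 0, d l)) (snd u (d l, d (c l m)))"
    by (rule path_comp[OF U(1) a1 a2])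
  moreover have "snd u (d l, d (c l m)) = m" using U(4)[OF a3] W(3) dlm by simp
  ultimately have first: "snd u (\<lambda>_. 0, d (c l m)) = c l m" using U(3) by simp
  have shift: "snd u (\<lambda>j. d (c l m) j + p j, \<lambda>j. d (c l m) j + q j) = snd x (p, q)"
    if "(p,q) \<in> pdom (fst x)" for p q
  proof -
    have "((\<lambda>j. d m j + p j), (\<lambda>j. d m j + q j)) \<in> pdom (fst w)" using that W(2) by (simp add: pdom_iff en2)
    from U(4)[OF this] W(4)[OF that] show ?thesis using dlm by (simp add: add.assoc)
  qed
  show "pcond (c l m) x (prepend k G l (prepend k G m x))"
    unfolding pcond_def u_def[symmetric] w_def[symmetric] using U(1) fu first shift by blast
qed

lemma prepend_cancel: assumes l: "l \<in> M" and x: "is_path k G x" and y: "is_path k G y"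
  and "s l = prng x" "s l = prng y" and e: "prepend k G l x = prepend k G l y"
  shows "x = y"
proof -
  note X = prepend_props[OF l x assms(4)] and Y = prepend_props[OF l y assms(5)]
  have fe0: "fst (prepend k G l x) = fst (prepend k G l y)" using e by simp
  have fe: "\<And>j. enat (d l j) + fst x j = enat (d l j) + fst y j" using fe0 unfolding X(2) Y(2) by (rule fun_cong)
  have f: "fst x = fst y" by (intro ext) (rule en4, rule fe)
  have "snd x pq = snd y pq" for pq
  proof (cases "pq \<in> pdom (fst x)")
    case True
    then obtain p q where pq: "pq = (p,q)" by (cases pq)
    have T2: "(p,q) \<in> pdom (fst y)" using True pq f by simp
    have "snd x (p,q) = snd y (p,q)" using X(4)[OF True[unfolded pq]] Y(4)[OF T2] e by simp
    thus ?thesis using pq by simp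
  next
    case False
    hence "pq \<notin> pdom (fst y)" using f by simp
    thus ?thesis using path_undef[OF x False] path_undef[OF y] by simp
  qed
  thus ?thesis using f by (simp add: prod_eq_iff fun_eq_iff)
qed

lemma prepend_inj2: assumes "l \<in> M" "l' \<in> M" "is_path k G x" "is_path k G y"
  "s l = prng x" "s l' = prng y" "d l = d l'" "prepend k G l x = prepend k G l' y"
  shows "l = l' \<and> x = y"
proof -
  have "l = l'" using prepend_props(3)[OF assms(1,3,5)] prepend_props(3)[OF assms(2,4,6)] assms(7,8) by metis
  moreover have "x = y" by (rule prepend_cancel[OF assms(1,3,4,5)]) (use assms(6,8) \<open>l = l'\<close> in simp_all)
  ultimately show ?thesis by simp
qed

definition shiftp :: "(nat \<Rightarrow> nat) \<Rightarrow> 'a kpath \<Rightarrow> 'a kpath" where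
  "shiftp n z = (\<lambda>j. fst z j - enat (n j),
     \<lambda>(p,q). if (p,q) \<in> pdom (\<lambda>j. fst z j - enat (n j)) then snd z (\<lambda>j. n j + p j, \<lambda>j. n j + q j) else undefined)"

lemma factor_path: assumes z: "is_path k G z" and n: "\<And>j. enat (n j) \<le> fst z j"
  shows "is_path k G (shiftp n z)" "snd z (\<lambda>_. 0, n) \<in> M" "d (snd z (\<lambda>_. 0, n)) = n"
    "s (snd z (\<lambda>_. 0, n)) = prng (shiftp n z)" "fst (shiftp n z) = (\<lambda>j. fst z j - enat (n j))"
    "prepend k G (snd z (\<lambda>_. 0, n)) (shiftp n z) = z"
proof -
  define x where "x = shiftp n z"
  have fx: "fst x = (\<lambda>j. fst z j - enat (n j))" by (simp add: x_def shiftp_def)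
  have sx: "snd x (p,q) = (if (p,q) \<in> pdom (fst x) then snd z (\<lambda>j. n j + p j, \<lambda>j. n j + q j) else undefined)" for p q
    by (simp add: x_def shiftp_def)
  have sh: "((\<lambda>j. n j + p j), (\<lambda>j. n j + q j)) \<in> pdom (fst z)" if "(p,q) \<in> pdom (fst x)" for p q
    using that n en5 unfolding fx pdom_iff by auto
  show px: "is_path k G (shiftp n z)" unfolding x_def[symmetric] is_path_def
  proof (intro conjI allI impI)
    fix j assume "j \<notin> {1..k}" thus "fst x j = 0" using path_supp[OF z] fx by (simp add: zero_enat_def)
  next
    fix pq assume "pq \<notin> pdom (fst x)" thus "snd x pq = undefined" by (cases pq) (simp add: sx)
  next
    fix p q assume h: "(p,q) \<in> pdom (fst x)"
    have pp: "(p,p) \<in> pdom (fst x)" "(q,q) \<in> pdom (fst x)" using pdom_le[OF h] by auto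
    note P = pathD[OF z sh[OF h]]
    show "snd x (p, q) \<in> M" "d (snd x (p, q)) = (\<lambda>j. q j - p j)" "r (snd x (p, q)) = snd x (p, p)"
      "s (snd x (p, q)) = snd x (q, q)" using P h pp by (simp_all add: sx)
  next
    fix p q t assume h: "(p, q) \<in> pdom (fst x) \<and> (q, t) \<in> pdom (fst x)"
    have pt: "(p,t) \<in> pdom (fst x)" using h unfolding pdom_iff using order_trans by blast
    show "snd x (p, t) = c (snd x (p, q)) (snd x (q, t))"
      using path_comp[OF z sh[of p q] sh[of q t]] h pt by (simp add: sx)
  qed
  have n0: "((\<lambda>_. 0), n) \<in> pdom (fst z)" using n by (simp add: pdom_iff)
  note P = pathD[OF z n0]
  show "snd z (\<lambda>_. 0, n) \<in> M" "d (snd z (\<lambda>_. 0, n)) = n" using P by auto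
  have z0: "((\<lambda>_. 0), (\<lambda>_. 0)) \<in> pdom (fst x)" by (simp add: pdom_iff zero_enat_def[symmetric])
  show sp: "s (snd z (\<lambda>_. 0, n)) = prng (shiftp n z)" using P z0 unfolding x_def[symmetric] by (simp add: prng_def sx)
  show "fst (shiftp n z) = (\<lambda>j. fst z j - enat (n j))" using fx x_def by simp
  show "prepend k G (snd z (\<lambda>_. 0, n)) (shiftp n z) = z"
  proof (rule prepend_unique[OF _ px sp])
    show "snd z (\<lambda>_. 0, n) \<in> M" using P by simp
    have dn: "d (snd z (\<lambda>_. 0, n)) = n" using P by simp
    have f2: "fst z = (\<lambda>j. enat (n j) + fst x j)" using fx n en6 by simp
    have s3: "\<forall>p q. (p, q) \<in> pdom (fst x) \<longrightarrow> snd z (\<lambda>j. n j + p j, \<lambda>j. n j + q j) = snd x (p, q)"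
      using sx by simp
    show "pcond (snd z (\<lambda>_. 0, n)) (shiftp n z) z" unfolding pcond_def x_def[symmetric] dn
      using z f2 s3 by blast
  qed
qed

end

lemma en8: "enat a \<le> enat a + e" by (cases e) auto

context kg begin

lemma Lmin_iff: "(\<eta>, \<zeta>) \<in> Lmin G \<mu> \<nu> \<longleftrightarrow> \<eta> \<in> M \<and> \<zeta> \<in> M \<and> s \<mu> = r \<eta> \<and> s \<nu> = r \<zeta> \<and>
      c \<mu> \<eta> = c \<nu> \<zeta> \<and> d (c \<mu> \<eta>) = sup (d \<mu>) (d \<nu>)"
  by (simp add: Lmin_def)

lemma Lmin_deg: assumes "(\<eta>, \<zeta>) \<in> Lmin G \<mu> \<nu>" "\<mu> \<in> M" "\<nu> \<in> M"
  shows "d \<eta> = (\<lambda>j. max (d \<mu> j) (d \<nu> j) - d \<mu> j)" "d \<zeta> = (\<lambda>j. max (d \<mu> j) (d \<nu> j) - d \<nu> j)"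
    "s \<eta> = s \<zeta>"
proof -
  have h: "\<eta> \<in> M" "\<zeta> \<in> M" "s \<mu> = r \<eta>" "s \<nu> = r \<zeta>" "c \<mu> \<eta> = c \<nu> \<zeta>" "d (c \<mu> \<eta>) = sup (d \<mu>) (d \<nu>)"
    using assms(1) by (auto simp: Lmin_iff)
  have 1: "d (c \<mu> \<eta>) = (\<lambda>j. d \<mu> j + d \<eta> j)" by (rule d_c[OF assms(2) h(1,3)])
  have 2: "d (c \<nu> \<zeta>) = (\<lambda>j. d \<nu> j + d \<zeta> j)" by (rule d_c[OF assms(3) h(2,4)])
  have 3: "d (c \<mu> \<eta>) j = max (d \<mu> j) (d \<nu> j)" for j using h(6) by (simp add: sup_max)
  have "d \<mu> j + d \<eta> j = max (d \<mu> j) (d \<nu> j)" for j using 1 3[of j] by simp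
  hence "d \<eta> j = max (d \<mu> j) (d \<nu> j) - d \<mu> j" for j by (metis add_diff_cancel_left')
  thus "d \<eta> = (\<lambda>j. max (d \<mu> j) (d \<nu> j) - d \<mu> j)" by (rule ext)
  have "d \<nu> j + d \<zeta> j = max (d \<mu> j) (d \<nu> j)" for j using 2 3[of j] h(5) by simp
  hence "d \<zeta> j = max (d \<mu> j) (d \<nu> j) - d \<nu> j" for j by (metis add_diff_cancel_left')
  thus "d \<zeta> = (\<lambda>j. max (d \<mu> j) (d \<nu> j) - d \<nu> j)" by (rule ext)
  show "s \<eta> = s \<zeta>" using s_c[OF assms(2) h(1,3)] s_c[OF assms(3) h(2,4)] h(5) by simp
qed

lemma Lmin_finite: assumes "finite_kgraph G" "\<mu> \<in> M" "\<nu> \<in> M" shows "finite (Lmin G \<mu> \<nu>)"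
proof -
  have "Lmin G \<mu> \<nu> \<subseteq> kLam G (\<lambda>j. max (d \<mu> j) (d \<nu> j) - d \<mu> j) \<times> kLam G (\<lambda>j. max (d \<mu> j) (d \<nu> j) - d \<nu> j)"
  proof
    fix p assume p: "p \<in> Lmin G \<mu> \<nu>"
    obtain a b where ab: "p = (a,b)" by (cases p)
    have L: "(a,b) \<in> Lmin G \<mu> \<nu>" using p ab by simp
    have "a \<in> M" "b \<in> M" using L by (auto simp: Lmin_iff)
    thus "p \<in> kLam G (\<lambda>j. max (d \<mu> j) (d \<nu> j) - d \<mu> j) \<times> kLam G (\<lambda>j. max (d \<mu> j) (d \<nu> j) - d \<nu> j)"
      using Lmin_deg(1,2)[OF L assms(2,3)] ab by (simp add: kLam_def)
  qed
  moreover have "finite (kLam G (\<lambda>j. max (d \<mu> j) (d \<nu> j) - d \<mu> j) \<times> kLam G (\<lambda>j. max (d \<mu> j) (d \<nu> j) - d \<nu> j))"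
    using assms(1) unfolding finite_kgraph_def by blast
  ultimately show ?thesis by (rule finite_subset)
qed

lemma lmin_uniq: assumes L1: "(\<eta>, \<zeta>) \<in> Lmin G \<mu> \<nu>" and L2: "(\<eta>', \<zeta>') \<in> Lmin G \<mu> \<nu>"
  and mu: "\<mu> \<in> M" and nu: "\<nu> \<in> M" and w: "is_path k G w" and w': "is_path k G w'"
  and sw: "s \<eta> = prng w" and sw': "s \<eta>' = prng w'" and e: "prepend k G \<eta> w = prepend k G \<eta>' w'"
  shows "\<eta> = \<eta>' \<and> \<zeta> = \<zeta>' \<and> w = w'"
proof -
  have h1: "\<eta> \<in> M" "\<zeta> \<in> M" "s \<nu> = r \<zeta>" "c \<mu> \<eta> = c \<nu> \<zeta>" "s \<mu> = r \<eta>" using L1 by (auto simp: Lmin_iff)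
  have h2: "\<eta>' \<in> M" "\<zeta>' \<in> M" "s \<nu> = r \<zeta>'" "c \<mu> \<eta>' = c \<nu> \<zeta>'" "s \<mu> = r \<eta>'" using L2 by (auto simp: Lmin_iff)
  have dd: "d \<eta> = d \<eta>'" using Lmin_deg(1)[OF L1 mu nu] Lmin_deg(1)[OF L2 mu nu] by simp
  have a: "\<eta> = \<eta>' \<and> w = w'" by (rule prepend_inj2[OF h1(1) h2(1) w w' sw sw' dd e])
  hence "c \<nu> \<zeta> = c \<nu> \<zeta>'" using h1(4) h2(4) by simp
  hence "\<nu> = \<nu> \<and> \<zeta> = \<zeta>'" using fact_uniq[OF nu h1(2) nu h2(2) h1(3) h2(3)] by simp
  thus ?thesis using a by simp
qed

lemma lmin_ex: assumes mu: "\<mu> \<in> M" and nu: "\<nu> \<in> M" and y: "is_path k G y" and x: "is_path k G x"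
  and sy: "s \<mu> = prng y" and sx: "s \<nu> = prng x" and e: "prepend k G \<mu> y = prepend k G \<nu> x"
  shows "\<exists>\<eta> \<zeta> n. (\<eta>, \<zeta>) \<in> Lmin G \<mu> \<nu> \<and> is_path k G (shiftp n (prepend k G \<mu> y)) \<and>
     s \<eta> = prng (shiftp n (prepend k G \<mu> y)) \<and>
     y = prepend k G \<eta> (shiftp n (prepend k G \<mu> y)) \<and> x = prepend k G \<zeta> (shiftp n (prepend k G \<mu> y)) \<and>
     (\<forall>j. enat (n j) \<le> fst (prepend k G \<mu> y) j)"
proof -
  define z where "z = prepend k G \<mu> y"
  note Zm = prepend_props[OF mu y sy, folded z_def]
  note Zn = prepend_props[OF nu x sx, unfolded e[symmetric], folded z_def]
  define n where "n = (\<lambda>j. max (d \<mu> j) (d \<nu> j))"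
  have nle: "\<forall>j. enat (n j) \<le> fst z j"
  proof
    fix j
    have fz2: "fst z = (\<lambda>j. enat (d \<nu> j) + fst x j)" using prepend_props(2)[OF nu x sx] e z_def by simp
    have "enat (d \<mu> j) \<le> fst z j" unfolding Zm(2) by (rule en8)
    moreover have "enat (d \<nu> j) \<le> fst z j" unfolding fz2 by (rule en8)
    ultimately
    show "enat (n j) \<le> fst z j" unfolding n_def by (simp add: max_def)
  qed
  note F = factor_path[OF Zm(1) nle[rule_format]]
  define w where "w = shiftp n z"
  define al where "al = snd z (\<lambda>_. 0, n)"
  note F = F[folded w_def al_def]
  have gen: "\<exists>\<eta>. \<eta> \<in> M \<and> s l = r \<eta> \<and> c l \<eta> = al \<and> s \<eta> = prng w \<and> u = prepend k G \<eta> w"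
    if l: "l \<in> M" and u: "is_path k G u" and su: "s l = prng u" and zu: "z = prepend k G l u"
      and ln: "\<forall>j. d l j \<le> n j" for l u
  proof -
    note Zl = prepend_props[OF l u su, folded zu]
    have p1: "((\<lambda>_. 0), d l) \<in> pdom (fst z)" using Zl(2) en8 by (simp add: pdom_iff)
    have p2: "(d l, n) \<in> pdom (fst z)" using ln nle by (simp add: pdom_iff)
    define et where "et = snd z (d l, n)"
    have al: "al = c l et" using path_comp[OF Zl(1) p1 p2] Zl(3) unfolding al_def et_def by simp
    note P1 = pathD[OF Zl(1) p1] and P2 = pathD[OF Zl(1) p2]
    have etM: "et \<in> M" using P2 et_def by simp
    have ret: "s l = r et" using P1 P2 Zl(3) et_def by simp
    have n0: "((\<lambda>_. 0), n) \<in> pdom (fst z)" using nle by (simp add: pdom_iff)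
    have set: "s et = s al" using pathD[OF Zl(1) n0] P2 et_def al_def by simp
    have sew: "s et = prng w" using set F(4) by simp
    have pu: "is_path k G (prepend k G et w)" using prepend_props(1)[OF etM F(1) sew] .
    have pr: "prng (prepend k G et w) = r et" by (rule prng_prepend[OF etM F(1) sew])
    have "prepend k G l (prepend k G et w) = prepend k G al w"
      using prepend_assoc[OF l etM ret F(1) sew] al by simp
    also have "\<dots> = prepend k G l u" using F(6) zu by simp
    finally have eq: "prepend k G l (prepend k G et w) = prepend k G l u" .
    have s2: "s l = prng (prepend k G et w)" using pr ret by simp
    have "prepend k G et w = u" by (rule prepend_cancel[OF l pu u s2 su eq])
    thus ?thesis using etM ret al sew by auto
  qed
  obtain et where et: "et \<in> M" "s \<mu> = r et" "c \<mu> et = al" "s et = prng w" "y = prepend k G et w"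
    using gen[OF mu y sy z_def] n_def by auto
  obtain ze where ze: "ze \<in> M" "s \<nu> = r ze" "c \<nu> ze = al" "s ze = prng w" "x = prepend k G ze w"
    using gen[OF nu x sx] n_def e z_def by auto
  have "d (c \<mu> et) = sup (d \<mu>) (d \<nu>)" using et(3) F(3) n_def by (simp add: sup_max fun_eq_iff)
  hence "(et, ze) \<in> Lmin G \<mu> \<nu>" using et ze by (simp add: Lmin_iff)
  thus ?thesis using et ze F(1) nle unfolding w_def z_def by blast
qed

end

lemma sum_restr_disj: assumes "finite S" "\<forall>a\<in>S. \<forall>b\<in>S. a \<noteq> b \<longrightarrow> C a \<inter> C b = {}"
  shows "(\<Sum>l\<in>S. restr (C l) f y) = restr (\<Union>l\<in>S. C l) f y"
proof (cases "\<exists>l\<in>S. y \<in> C l")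
  case True
  then obtain l0 where l0: "l0 \<in> S" "y \<in> C l0" by blast
  have "(\<Sum>l\<in>S. restr (C l) f y) = (\<Sum>l\<in>S. if l = l0 then f y else 0)"
    by (rule sum.cong) (use assms(2) l0 in \<open>auto simp: restr_def\<close>)
  also have "\<dots> = f y" using assms(1) l0(1) by simp
  finally show ?thesis using l0 by (auto simp: restr_def)
next
  case False thus ?thesis by (auto simp: restr_def)
qed

theorem proposition3p5:
  fixes k :: nat and G :: "'a kgraph" and J K :: "nat set"
    and T :: "'a \<Rightarrow> 'a kpath op"
  assumes "is_kgraph k G" and "finite_kgraph G" and "no_sources k G"
    and "J \<inter> K = {}" and "J \<union> K = {1..k}" and "J \<noteq> {}" and "K \<noteq> {}"
    and "\<forall>l\<in>mor G. bounded_op (bdryK k G J K) (T l)"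
    and "\<forall>l\<in>mor G. \<forall>x\<in>bdryK k G J K.
           T l (delta x) = (if src G l = prng x then delta (prepend k G l x) else (\<lambda>_. 0))"
  shows "TCK_family k G (bdryK k G J K) T \<and>
    (\<forall>v\<in>vertices G. \<forall>i\<in>K.
       op_eq (bdryK k G J K)
         (op_sum {e \<in> kLam G (unitv i). rng G e = v} (\<lambda>e. T e \<circ> adj (bdryK k G J K) (T e)))
         (T v))"
proof -
  interpret kg k G by (rule kg.intro) (rule assms(1))
  define X where "X = bdryK k G J K"
  have Xp: "is_path k G x" if "x \<in> X" for x using that by (simp add: X_def bdryK_def)
  have X_pre: "prepend k G l x \<in> X" if l: "l \<in> M" and x: "x \<in> X" and sl: "s l = prng x" for l x
  proof -
    note P = prepend_props[OF l Xp[OF x] sl]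
    have a: "\<forall>j\<in>J. fst x j \<noteq> \<infinity>" "\<forall>i\<in>K. fst x i = \<infinity>" using x by (simp_all add: X_def bdryK_def)
    have b: "enat (d l j) + fst x j \<noteq> \<infinity>" if "j \<in> J" for j
      using a(1) that by (cases "fst x j") auto
    have "is_path k G (prepend k G l x) \<and> (\<forall>j\<in>J. fst (prepend k G l x) j \<noteq> \<infinity>) \<and> (\<forall>i\<in>K. fst (prepend k G l x) i = \<infinity>)"
      using P(1,2) a(2) b by simp
    thus ?thesis unfolding X_def bdryK_def by blast
  qed
  have X_shift: "shiftp n z \<in> X" if z: "z \<in> X" and n: "\<forall>j. enat (n j) \<le> fst z j" for n z
  proof -
    note F = factor_path[OF Xp[OF z] n[rule_format]]
    have a: "(\<forall>j\<in>J. fst z j \<noteq> \<infinity>) \<and> (\<forall>i\<in>K. fst z i = \<infinity>)" using z by (simp add: X_def bdryK_def)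
    have b: "fst z j - enat (n j) \<noteq> \<infinity>" if "j \<in> J" for j using a that by (cases "fst z j") auto
    have "is_path k G (shiftp n z) \<and> (\<forall>j\<in>J. fst (shiftp n z) j \<noteq> \<infinity>) \<and> (\<forall>i\<in>K. fst (shiftp n z) i = \<infinity>)"
      using F(1,5) a b by simp
    thus ?thesis unfolding X_def bdryK_def by blast
  qed
  define D where "D l = {x \<in> X. prng x = s l}" for l
  define P where "P l = prepend k G l" for l
  have DX: "D l \<subseteq> X" for l by (auto simp: D_def)
  have PX: "P l ` D l \<subseteq> X" if "l \<in> M" for l using X_pre[OF that] by (auto simp: D_def P_def)
  have inj: "inj_on (P l) (D l)" if l: "l \<in> M" for l
  proof (rule inj_onI)
    fix x y assume "x \<in> D l" "y \<in> D l" "P l x = P l y"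
    thus "x = y" using prepend_cancel[OF l Xp Xp] by (auto simp: D_def P_def)
  qed
  have del: "\<forall>x\<in>X. T l (delta x) = (if x \<in> D l then delta (P l x) else (\<lambda>_. 0))" if "l \<in> M" for l
    using assms(9) that by (auto simp: D_def P_def X_def)
  have Tb: "bounded_op X (T l)" if "l \<in> M" for l using assms(8) that by (simp add: X_def)
  have Top: "T l f = opf (D l) (P l) f" if "l \<in> M" "f \<in> L2 X" for l f
    by (rule op_determined[OF Tb[OF that(1)] DX inj[OF that(1)] del[OF that(1)] that(2)])
  have Tad: "adj X (T l) f = adjf (D l) (P l) f" if "l \<in> M" "f \<in> L2 X" for l f
    by (rule op_adj[OF Tb[OF that(1)] DX PX[OF that(1)] inj[OF that(1)] del[OF that(1)] that(2)])
  have TL2: "T l f \<in> L2 X" if "l \<in> M" "f \<in> L2 X" for l f by (rule bop_L2[OF Tb[OF that(1)] that(2)])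
  have adL2: "adj X (T l) f \<in> L2 X" if "l \<in> M" "f \<in> L2 X" for l f
    using Tad[OF that] adjf_L2(1)[OF DX PX[OF that(1)] inj[OF that(1)] that(2)] by simp
  have RP: "T l (adj X (T l) f) = restr (P l ` D l) f" if "l \<in> M" "f \<in> L2 X" for l f
    using Top[OF that(1) adL2[OF that]] Tad[OF that] opf_adjf[OF inj[OF that(1)]] by simp
  have PR: "adj X (T l) (T l f) = restr (D l) f" if "l \<in> M" "f \<in> L2 X" for l f
    using Tad[OF that(1) TL2[OF that]] Top[OF that] adjf_opf[OF inj[OF that(1)]] by simp
  have Tv: "T v f = restr (D v) f" if v: "v \<in> M" "d v = (\<lambda>_. 0)" and f: "f \<in> L2 X" for v f
  proof -
    have sv: "s v = v" using vertex[OF v] by simp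
    have "\<forall>x\<in>D v. P v x = x"
    proof
      fix x assume "x \<in> D v"
      hence "x \<in> X" "prng x = v" using sv by (auto simp: D_def)
      thus "P v x = x" using prepend_vertex[OF Xp[of x]] by (simp add: P_def)
    qed
    thus ?thesis using Top[OF v(1) f] opf_id by simp
  qed
  have vert: "v \<in> M" "d v = (\<lambda>_. 0)" if "v \<in> vertices G" for v
    using that by (auto simp: vertices_def kLam_def)
  have disj: "\<forall>a\<in>{l \<in> kLam G n. r l = v}. \<forall>b\<in>{l \<in> kLam G n. r l = v}. a \<noteq> b \<longrightarrow> P a ` D a \<inter> P b ` D b = {}" for n v
  proof (intro ballI impI)
    fix a b assume a: "a \<in> {l \<in> kLam G n. r l = v}" and b: "b \<in> {l \<in> kLam G n. r l = v}" and ab: "a \<noteq> b"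
    have am: "a \<in> M" "b \<in> M" "d a = d b" using a b by (auto simp: kLam_def)
    show "P a ` D a \<inter> P b ` D b = {}"
    proof (rule ccontr)
      assume "P a ` D a \<inter> P b ` D b \<noteq> {}"
      then obtain x y where xy: "x \<in> D a" "y \<in> D b" "P a x = P b y" by blast
      have xX: "x \<in> X" "s a = prng x" and yX: "y \<in> X" "s b = prng y" using xy by (auto simp: D_def)
      have "a = b \<and> x = y" by (rule prepend_inj2[OF am(1,2) Xp[OF xX(1)] Xp[OF yX(1)] xX(2) yX(2) am(3)])
        (use xy(3) in \<open>simp add: P_def\<close>)
      hence "a = b" by simp
      thus False using ab by simp
    qed
  qed
  have fin: "finite {l \<in> kLam G n. r l = v}" for n v using assms(2) unfolding finite_kgraph_def by simp
  have sumS: "op_sum {l \<in> kLam G n. r l = v} (\<lambda>l. T l \<circ> adj X (T l)) f = restr (\<Union>l\<in>{l \<in> kLam G n. r l = v}. P l ` D l) f"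
    if f: "f \<in> L2 X" for n v f
  proof
    fix y
    have "op_sum {l \<in> kLam G n. r l = v} (\<lambda>l. T l \<circ> adj X (T l)) f y = (\<Sum>l\<in>{l \<in> kLam G n. r l = v}. restr (P l ` D l) f y)"
      unfolding op_sum_def by (rule sum.cong) (auto simp: RP[OF _ f] kLam_def)
    also have "\<dots> = restr (\<Union>l\<in>{l \<in> kLam G n. r l = v}. P l ` D l) f y"
      by (rule sum_restr_disj[OF fin disj])
    finally show "op_sum {l \<in> kLam G n. r l = v} (\<lambda>l. T l \<circ> adj X (T l)) f y = restr (\<Union>l\<in>{l \<in> kLam G n. r l = v}. P l ` D l) f y" .
  qed
  have UD: "(\<Union>l\<in>{l \<in> kLam G n. r l = v}. P l ` D l) \<subseteq> D v" if v: "v \<in> M" "d v = (\<lambda>_. 0)" for n v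
  proof
    fix y assume "y \<in> (\<Union>l\<in>{l \<in> kLam G n. r l = v}. P l ` D l)"
    then obtain l x where l: "l \<in> M" "r l = v" and x: "x \<in> D l" and y: "y = P l x" by (auto simp: kLam_def)
    have "prng y = r l" using prng_prepend[OF l(1) Xp] x y by (auto simp: D_def P_def)
    moreover have "y \<in> X" using PX[OF l(1)] x y by auto
    ultimately show "y \<in> D v" using l vertex[OF v] by (simp add: D_def)
  qed
  have T5: "op_eq X (adj X (T \<mu>) \<circ> T \<nu>) (op_sum (Lmin G \<mu> \<nu>) (\<lambda>(\<eta>, \<zeta>). T \<eta> \<circ> adj X (T \<zeta>)))"
    if mu: "\<mu> \<in> M" and nu: "\<nu> \<in> M" for \<mu> \<nu>
    unfolding op_eq_def
  proof (intro ballI ext)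
    fix f y assume f: "f \<in> L2 X"
    let ?L = "Lmin G \<mu> \<nu>"
    define tm where "tm p = opf (D (fst p)) (P (fst p)) (adjf (D (snd p)) (P (snd p)) f) y" for p
    have Lm: "fst p \<in> M" "snd p \<in> M" "s (fst p) = s (snd p)" "s \<mu> = r (fst p)" "s \<nu> = r (snd p)"
      "c \<mu> (fst p) = c \<nu> (snd p)" if "p \<in> ?L" for p
    proof -
      obtain a b where p: "p = (a,b)" by (cases p)
      have L: "(a,b) \<in> ?L" using that p by simp
      show "fst p \<in> M" "snd p \<in> M" "s \<mu> = r (fst p)" "s \<nu> = r (snd p)" "c \<mu> (fst p) = c \<nu> (snd p)"
        using L p by (auto simp: Lmin_iff)
      show "s (fst p) = s (snd p)" using Lmin_deg(3)[OF L mu nu] p by simp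
    qed
    have rhs: "op_sum ?L (\<lambda>(\<eta>, \<zeta>). T \<eta> \<circ> adj X (T \<zeta>)) f y = (\<Sum>p\<in>?L. tm p)"
      unfolding op_sum_def
    proof (rule sum.cong)
      fix p assume p: "p \<in> ?L"
      have "(case p of (\<eta>, \<zeta>) \<Rightarrow> T \<eta> \<circ> adj X (T \<zeta>)) f y = T (fst p) (adj X (T (snd p)) f) y"
        by (cases p) simp
      also have "\<dots> = tm p" unfolding tm_def
        using Top[OF Lm(1)[OF p] adL2[OF Lm(2)[OF p] f]] Tad[OF Lm(2)[OF p] f] by simp
      finally show "(case p of (\<eta>, \<zeta>) \<Rightarrow> T \<eta> \<circ> adj X (T \<zeta>)) f y = tm p" .
    qed simp
    have lhs: "(adj X (T \<mu>) \<circ> T \<nu>) f y = adjf (D \<mu>) (P \<mu>) (opf (D \<nu>) (P \<nu>) f) y"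
      using Tad[OF mu TL2[OF nu f]] Top[OF nu f] by simp
    have tm_nz: "\<exists>w\<in>D (fst p). y = P (fst p) w" if "tm p \<noteq> 0" for p
      using that unfolding tm_def opf_def by (auto split: if_splits)
    have tm_val: "tm p = f (P (snd p) w)" if p: "p \<in> ?L" and w: "w \<in> D (fst p)" and y: "y = P (fst p) w" for p w
    proof -
      have "the_inv_into (D (fst p)) (P (fst p)) y = w" using the_inv_into_f_f[OF inj[OF Lm(1)[OF p]] w] y by simp
      moreover have "w \<in> D (snd p)" using w Lm(3)[OF p] by (simp add: D_def)
      ultimately show ?thesis unfolding tm_def opf_def adjf_def using w y by auto
    qed
    show "(adj X (T \<mu>) \<circ> T \<nu>) f y = op_sum ?L (\<lambda>(\<eta>, \<zeta>). T \<eta> \<circ> adj X (T \<zeta>)) f y"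
    proof (cases "\<exists>p\<in>?L. \<exists>w\<in>D (fst p). y = P (fst p) w")
      case True
      then obtain p0 w0 where p0: "p0 \<in> ?L" and w0: "w0 \<in> D (fst p0)" and y0: "y = P (fst p0) w0" by blast
      have finL: "finite ?L" by (rule Lmin_finite[OF assms(2) mu nu])
      have others: "tm p = 0" if p: "p \<in> ?L - {p0}" for p
      proof (rule ccontr)
        assume "tm p \<noteq> 0"
        then obtain w where w: "w \<in> D (fst p)" "y = P (fst p) w" using tm_nz by blast
        obtain a b where ab: "p = (a,b)" by (cases p)
        obtain a0 b0 where ab0: "p0 = (a0,b0)" by (cases p0)
        have "a = a0 \<and> b = b0 \<and> w = w0"
          by (rule lmin_uniq[of a b \<mu> \<nu> a0 b0]) (use p p0 ab ab0 mu nu w w0 y0 Xp in \<open>auto simp: D_def P_def\<close>)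
        thus False using p ab ab0 by simp
      qed
      have "(\<Sum>p\<in>?L. tm p) = tm p0 + (\<Sum>p\<in>?L - {p0}. tm p)" by (rule sum.remove[OF finL p0])
      also have "(\<Sum>p\<in>?L - {p0}. tm p) = 0" using others by simp
      finally have R: "(\<Sum>p\<in>?L. tm p) = f (P (snd p0) w0)" using tm_val[OF p0 w0 y0] by simp
      note L0 = Lm[OF p0]
      have w0X: "w0 \<in> X" "s (fst p0) = prng w0" using w0 by (auto simp: D_def)
      have yX: "y \<in> X" using PX[OF L0(1)] w0 y0 by auto
      have pry: "prng y = s \<mu>" using prng_prepend[OF L0(1) Xp[OF w0X(1)] w0X(2)] y0 L0(4) by (simp add: P_def)
      have yD: "y \<in> D \<mu>" using yX pry by (simp add: D_def)
      define x0 where "x0 = P (snd p0) w0"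
      have sw: "s (snd p0) = prng w0" using w0X L0(3) by simp
      have x0X: "x0 \<in> X" using X_pre[OF L0(2) w0X(1) sw] by (simp add: x0_def P_def)
      have prx: "prng x0 = s \<nu>" using prng_prepend[OF L0(2) Xp[OF w0X(1)] sw] L0(5) by (simp add: x0_def P_def)
      have x0D: "x0 \<in> D \<nu>" using x0X prx by (simp add: D_def)
      have "P \<mu> y = prepend k G (c \<mu> (fst p0)) w0"
        using prepend_assoc[OF mu L0(1) L0(4) Xp[OF w0X(1)] w0X(2)] y0 by (simp add: P_def)
      also have "\<dots> = prepend k G (c \<nu> (snd p0)) w0" using L0(6) by simp
      also have "\<dots> = P \<nu> x0"
        using prepend_assoc[OF nu L0(2) L0(5) Xp[OF w0X(1)] sw] by (simp add: P_def x0_def)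
      finally have Py: "P \<mu> y = P \<nu> x0" .
      have "adjf (D \<mu>) (P \<mu>) (opf (D \<nu>) (P \<nu>) f) y = f x0"
        using yD Py x0D the_inv_into_f_f[OF inj[OF nu] x0D] by (auto simp: adjf_def opf_def)
      thus ?thesis using lhs rhs R x0_def by simp
    next
      case False
      have R: "(\<Sum>p\<in>?L. tm p) = 0" using tm_nz False by (meson sum.neutral)
      have "adjf (D \<mu>) (P \<mu>) (opf (D \<nu>) (P \<nu>) f) y = 0"
      proof (rule ccontr)
        assume "adjf (D \<mu>) (P \<mu>) (opf (D \<nu>) (P \<nu>) f) y \<noteq> 0"
        then obtain x where yD: "y \<in> D \<mu>" and xD: "x \<in> D \<nu>" and e: "P \<mu> y = P \<nu> x"
          unfolding adjf_def opf_def by (auto split: if_splits)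
        have yX: "y \<in> X" "s \<mu> = prng y" and xX: "x \<in> X" "s \<nu> = prng x" using yD xD by (auto simp: D_def)
        obtain \<eta> \<zeta> n where L: "(\<eta>, \<zeta>) \<in> ?L" and wp: "s \<eta> = prng (shiftp n (prepend k G \<mu> y))"
          and ye: "y = prepend k G \<eta> (shiftp n (prepend k G \<mu> y))"
          and nl: "\<forall>j. enat (n j) \<le> fst (prepend k G \<mu> y) j"
          using lmin_ex[OF mu nu Xp[OF yX(1)] Xp[OF xX(1)] yX(2) xX(2)] e by (auto simp: P_def)
        have "shiftp n (prepend k G \<mu> y) \<in> X" by (rule X_shift[OF X_pre[OF mu yX(1) yX(2)] nl])
        hence "shiftp n (prepend k G \<mu> y) \<in> D \<eta>" using wp by (simp add: D_def)
        hence "\<exists>p\<in>?L. \<exists>w\<in>D (fst p). y = P (fst p) w" using L ye by (auto simp: P_def intro!: bexI[of _ "(\<eta>,\<zeta>)"])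
        thus False using False by simp
      qed
      thus ?thesis using lhs rhs R by simp
    qed
  qed
  have TCK: "TCK_family k G X T" unfolding TCK_family_def
  proof (intro conjI ballI allI impI)
    fix l assume l: "l \<in> M"
    show "partial_isometry X (T l)" unfolding partial_isometry_def
      using Tb[OF l] restr_proj[of X "adj X (T l) \<circ> T l" "D l"] PR[OF l] by simp
  next
    fix v assume "v \<in> vertices G"
    note V = vert[OF this]
    show "is_projection X (T v)" by (rule restr_proj[where E="D v"]) (use Tv[OF V] in simp)
  next
    fix v w assume v: "v \<in> vertices G" and w: "w \<in> vertices G" and vw: "v \<noteq> w"
    note V = vert[OF v] and W = vert[OF w]
    show "op_eq X (T v \<circ> T w) zero_op" unfolding op_eq_def
    proof
      fix f assume f: "f \<in> L2 X"
      have "(T v \<circ> T w) f = restr (D v) (restr (D w) f)"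
        using Tv[OF W f] Tv[OF V L2_restr[OF f]] by simp
      also have "\<dots> = zero_op f"
        using vw vertex[OF V] vertex[OF W] by (auto simp: restr_def zero_op_def D_def fun_eq_iff)
      finally show "(T v \<circ> T w) f = zero_op f" .
    qed
  next
    fix l m assume l: "l \<in> M" and m: "m \<in> M" and lm: "s l = r m"
    show "op_eq X (T l \<circ> T m) (T (c l m))" unfolding op_eq_def
    proof
      fix f assume f: "f \<in> L2 X"
      have lmM: "c l m \<in> M" by (rule cmp_mor[OF l m lm])
      have "(T l \<circ> T m) f = opf (D l) (P l) (opf (D m) (P m) f)" using Top[OF m f] Top[OF l TL2[OF m f]] by simp
      also have "\<dots> = opf (D (c l m)) (P (c l m)) f"
      proof (rule opf_comp[OF inj[OF l] inj[OF m]])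
        show "D (c l m) = {x \<in> D m. P m x \<in> D l}"
        proof (intro set_eqI iffI)
          fix x assume "x \<in> D (c l m)"
          hence x: "x \<in> X" "prng x = s m" using s_c[OF l m lm] by (auto simp: D_def)
          have "P m x \<in> X" using X_pre[OF m x(1)] x(2) by (simp add: P_def)
          moreover have "prng (P m x) = s l" using prng_prepend[OF m Xp[OF x(1)]] x(2) lm by (simp add: P_def)
          ultimately show "x \<in> {x \<in> D m. P m x \<in> D l}" using x by (simp add: D_def)
        next
          fix x assume "x \<in> {x \<in> D m. P m x \<in> D l}"
          thus "x \<in> D (c l m)" using s_c[OF l m lm] by (simp add: D_def)
        qed
        show "\<forall>x\<in>D (c l m). P (c l m) x = P l (P m x)"
          using prepend_assoc[OF l m lm Xp] s_c[OF l m lm] by (simp add: D_def P_def)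
      qed
      also have "\<dots> = T (c l m) f" using Top[OF lmM f] by simp
      finally show "(T l \<circ> T m) f = T (c l m) f" .
    qed
  next
    fix l assume l: "l \<in> M"
    show "op_eq X (adj X (T l) \<circ> T l) (T (s l))" unfolding op_eq_def
    proof
      fix f assume f: "f \<in> L2 X"
      have "D (s l) = D l" using s_s[OF l] by (simp add: D_def)
      thus "(adj X (T l) \<circ> T l) f = T (s l) f" using PR[OF l f] Tv[OF mor_s[OF l] d_s[OF l] f] by simp
    qed
  next
    fix v n assume v: "v \<in> vertices G" and n: "is_degree k n"
    note V = vert[OF v]
    show "op_le X (op_sum {l \<in> kLam G n. r l = v} (\<lambda>l. T l \<circ> adj X (T l))) (T v)"
    proof (rule restr_le[of X _ "\<Union>l\<in>{l \<in> kLam G n. r l = v}. P l ` D l" _ "D v"])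
      show "\<forall>f\<in>L2 X. op_sum {l \<in> kLam G n. r l = v} (\<lambda>l. T l \<circ> adj X (T l)) f = restr (\<Union>l\<in>{l \<in> kLam G n. r l = v}. P l ` D l) f"
        using sumS by blast
      show "\<forall>f\<in>L2 X. T v f = restr (D v) f" using Tv[OF V] by blast
      show "(\<Union>l\<in>{l \<in> kLam G n. r l = v}. P l ` D l) \<inter> X \<subseteq> D v" using UD[OF V, of n] by blast
    qed
  next
    fix \<mu> \<nu> assume "\<mu> \<in> M" "\<nu> \<in> M"
    thus "op_eq X (adj X (T \<mu>) \<circ> T \<nu>) (op_sum (Lmin G \<mu> \<nu>) (\<lambda>(\<eta>, \<zeta>). T \<eta> \<circ> adj X (T \<zeta>)))"
      by (rule T5)
  qed
  have second: "op_eq X (op_sum {e \<in> kLam G (unitv i). r e = v} (\<lambda>e. T e \<circ> adj X (T e))) (T v)"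
    if v: "v \<in> vertices G" and i: "i \<in> K" for v i
    unfolding op_eq_def
  proof
    fix f assume f: "f \<in> L2 X"
    note V = vert[OF v]
    have eqD: "(\<Union>l\<in>{l \<in> kLam G (unitv i). r l = v}. P l ` D l) = D v"
    proof
      show "(\<Union>l\<in>{l \<in> kLam G (unitv i). r l = v}. P l ` D l) \<subseteq> D v" by (rule UD[OF V])
    next
      show "D v \<subseteq> (\<Union>l\<in>{l \<in> kLam G (unitv i). r l = v}. P l ` D l)"
      proof
        fix z assume z: "z \<in> D v"
        have zX: "z \<in> X" and pz: "prng z = v" using z vertex[OF V] by (auto simp: D_def)
        have inf: "fst z i = \<infinity>" using zX i by (simp add: X_def bdryK_def)
        have nle: "\<forall>j. enat (unitv i j) \<le> fst z j" using inf by (simp add: unitv_def zero_enat_def[symmetric])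
        note F = factor_path[OF Xp[OF zX] nle[rule_format]]
        define e where "e = snd z (\<lambda>_. 0, unitv i)"
        define w where "w = shiftp (unitv i) z"
        note F = F[folded e_def w_def]
        have wX: "w \<in> X" unfolding w_def by (rule X_shift[OF zX nle])
        have re: "r e = v" using prng_prepend[OF F(2) F(1) F(4)] F(6) pz by simp
        have "e \<in> {l \<in> kLam G (unitv i). r l = v}" using F(2,3) re by (simp add: kLam_def)
        moreover have "w \<in> D e" using wX F(4) by (simp add: D_def)
        moreover have "z = P e w" using F(6) by (simp add: P_def)
        ultimately show "z \<in> (\<Union>l\<in>{l \<in> kLam G (unitv i). r l = v}. P l ` D l)" by blast
      qed
    qed
    show "op_sum {e \<in> kLam G (unitv i). r e = v} (\<lambda>e. T e \<circ> adj X (T e)) f = T v f"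
      using sumS[OF f] eqD Tv[OF V f] by simp
  qed
  show ?thesis using TCK second unfolding X_def by blast
qed


end
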